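(* Let $M\in\mathbb{N}^*$ and $0<\beta_1<\beta_2<4(2+\sqrt{3})$. Then there exist $\tau>0$ and a set $\mathcal{B}\subset[\beta_1,\beta_2]$ of Lebesgue measure zero such that for every $\beta\in[\beta_1,\beta_2]\setminus\mathcal{B}$ and every $\gamma>0$ the following holds: there is $\nu>0$ such that for every multi-index $(\alpha,\alpha')\in\mathbb{N}^{\mathbb{Z}^*}\times\mathbb{N}^{\mathbb{Z}^*}$ with $|\alpha+\alpha'|\leq M$ which is not super-action preserving, $$\Big|\sum_{j\in\mathbb{Z}^*}\omega(j)\,(\alpha_j-\alpha'_j)\Big|\geq\frac{\nu}{\Big(\max_{j\in\mathrm{supp}(\alpha)\cup\mathrm{supp}(\alpha')}|j|\Big)^{\tau}},$$ where $$\omega(j)=\sqrt{\frac{\gamma|j|}{2}}\sqrt{|j|^2-\frac{\beta}{2}|j|+\beta-1},\qquad j\in\mathbb{Z}^*.$$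
   Context: $\mathbb{N}=\{0,1,2,\dots\}$, $\mathbb{N}^*=\mathbb{N}\setminus\{0\}$, $\mathbb{Z}^*=\mathbb{Z}\setminus\{0\}$. For $\alpha\in\mathbb{N}^{\mathbb{Z}^*}$, $|\alpha|=\sum_{j\in\mathbb{Z}^*}\alpha_j$ and $\mathrm{supp}(\alpha)=\{j:\alpha_j\neq0\}$. A multi-index $(\alpha,\alpha')\in\mathbb{N}^{\mathbb{Z}^*}\times\mathbb{N}^{\mathbb{Z}^*}$ is called super-action preserving if $\alpha_n+\alpha_{-n}=\alpha'_n+\alpha'_{-n}$ for all $n\in\mathbb{N}^*$. For $0<\beta<4(2+\sqrt3)$ the quantity under the second square root in $\omega(j)$ is positive for all $j\in\mathbb{Z}^*$, so $\omega(j)$ is real (these are the linear frequencies of the Kelvin–Helmholtz vortex sheet at the circle, with $\gamma$ the surface tension and $\beta=\mu^2/\gamma$ the Weber number, $\mu$ the velocity jump). *)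

theory Defs
  imports "HOL-Analysis.Analysis"
begin

text \<open>Multi-indices in N^(Z*): functions int => nat vanishing at 0 with finite support.\<close>
definition multi_index :: "(int \<Rightarrow> nat) \<Rightarrow> bool" where
  "multi_index a \<longleftrightarrow> a 0 = 0 \<and> finite {j. a j \<noteq> 0}"

definition supp_mi :: "(int \<Rightarrow> nat) \<Rightarrow> int set" where
  "supp_mi a = {j. a j \<noteq> 0}"

definition mi_len :: "(int \<Rightarrow> nat) \<Rightarrow> nat" where
  "mi_len a = (\<Sum>j\<in>supp_mi a. a j)"

definition super_action_preserving :: "(int \<Rightarrow> nat) \<Rightarrow> (int \<Rightarrow> nat) \<Rightarrow> bool" where
  "super_action_preserving a a' \<longleftrightarrow>
     (\<forall>n::nat. n \<ge> 1 \<longrightarrow> a (int n) + a (- int n) = a' (int n) + a' (- int n))"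

definition omega :: "real \<Rightarrow> real \<Rightarrow> int \<Rightarrow> real" where
  "omega \<beta> \<gamma> j = sqrt (\<gamma> * \<bar>real_of_int j\<bar> / 2) *
      sqrt (\<bar>real_of_int j\<bar>^2 - \<beta> / 2 * \<bar>real_of_int j\<bar> + \<beta> - 1)"

end

theory Submission
  imports Defs "HOL-Computational_Algebra.Primes" "HOL-Computational_Algebra.Fundamental_Theorem_Algebra"
begin


definition Ac :: "nat \<Rightarrow> real" where "Ac n = 2 * real n ^ 3 - 2 * real n"
definition Bc :: "nat \<Rightarrow> real" where "Bc n = real n * (real n - 2)"
definition rr :: "nat \<Rightarrow> real \<Rightarrow> real" where "rr n \<beta> = sqrt (Ac n - Bc n * \<beta>)"

lemma R_nonneg:
  assumes "0 \<le> \<beta>" "\<beta> \<le> 15" shows "0 \<le> Ac n - Bc n * \<beta>"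
proof -
  consider "n = 0" | "n = 1" | "n = 2" | "n \<ge> 3" by linarith
  then show ?thesis
  proof cases
    case 4
    have b: "0 < Bc n" using 4 unfolding Bc_def by (simp add: mult_pos_pos)
    have "Bc n * \<beta> \<le> Bc n * 15" using b assms by (simp add: mult_left_mono)
    moreover have "0 \<le> Ac n - Bc n * 15"
    proof -
      have e: "Ac n - Bc n * 15 = real n * ((2 * real n - 7) * (real n - 4))"
        unfolding Ac_def Bc_def by (simp add: algebra_simps power3_eq_cube)
      have "0 \<le> (2 * real n - 7) * (real n - 4)"
      proof (cases "n = 3")
        case True then show ?thesis by simp
      next
        case False then have "n \<ge> 4" using 4 by linarith
        then show ?thesis by (intro mult_nonneg_nonneg) auto
      qed
      then show ?thesis unfolding e by simp
    qed
    ultimately show ?thesis by linarith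
  qed (auto simp: Ac_def Bc_def assms)
qed

lemma R_pos:
  assumes "0 < \<beta>" "\<beta> < 15" "n \<ge> 1" shows "0 < Ac n - Bc n * \<beta>"
proof -
  consider "n = 1" | "n = 2" | "n \<ge> 3" using assms by linarith
  then show ?thesis
  proof cases
    case 3
    have b: "0 < Bc n" using 3 unfolding Bc_def by (simp add: mult_pos_pos)
    have "Bc n * \<beta> < Bc n * 15" using b assms by simp
    moreover have "0 \<le> Ac n - Bc n * 15" using R_nonneg[of 15 n] by simp
    ultimately show ?thesis by linarith
  qed (auto simp: Ac_def Bc_def assms)
qed

lemma rr_pos: "0 < \<beta> \<Longrightarrow> \<beta> < 15 \<Longrightarrow> n \<ge> 1 \<Longrightarrow> 0 < rr n \<beta>"
  using R_pos unfolding rr_def by simp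

lemma rr_sq: "0 \<le> \<beta> \<Longrightarrow> \<beta> \<le> 15 \<Longrightarrow> (rr n \<beta>)^2 = Ac n - Bc n * \<beta>"
  using R_nonneg unfolding rr_def by simp

lemma cont_rr[continuous_intros]: "continuous_on A (rr n)"
  unfolding rr_def by (intro continuous_intros)

definition GG :: "nat set \<Rightarrow> (nat \<Rightarrow> real) \<Rightarrow> nat \<Rightarrow> real \<Rightarrow> real" where
  "GG S e k \<beta> = (\<Sum>n\<in>S. e n * (- Bc n) ^ k * (Ac n - Bc n * \<beta>) powr (1/2 - real k))"

lemma GG_deriv:
  assumes "0 \<notin> S" "0 < \<beta>" "\<beta> < 15"
  shows "(GG S e k has_real_derivative (1/2 - real k) * GG S e (Suc k) \<beta>) (at \<beta>)"
proof -
  have "((\<lambda>x. e n * (- Bc n) ^ k * (Ac n - Bc n * x) powr (1/2 - real k)) has_real_derivative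
        (1/2 - real k) * (e n * (- Bc n) ^ Suc k * (Ac n - Bc n * \<beta>) powr (1/2 - real (Suc k)))) (at \<beta>)"
    if "n \<in> S" for n
  proof -
    have n1: "n \<ge> 1" using that assms by (cases n) auto
    have pos: "0 < Ac n - Bc n * \<beta>" using R_pos[OF assms(2,3) n1] .
    have d: "((\<lambda>x. Ac n - Bc n * x) has_real_derivative (- Bc n)) (at \<beta>)"
      by (auto intro!: derivative_eq_intros)
    have "((\<lambda>x. (Ac n - Bc n * x) powr (1/2 - real k)) has_real_derivative
       (1/2 - real k) * (Ac n - Bc n * \<beta>) powr (1/2 - real k - real 1) * (- Bc n)) (at \<beta>)"
      by (rule DERIV_fun_powr[OF d pos])
    then have "((\<lambda>x. e n * (- Bc n) ^ k * (Ac n - Bc n * x) powr (1/2 - real k)) has_real_derivative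
       e n * (- Bc n) ^ k * ((1/2 - real k) * (Ac n - Bc n * \<beta>) powr (1/2 - real k - real 1) * (- Bc n))) (at \<beta>)"
      by (rule DERIV_cmult)
    moreover have "1/2 - real k - real 1 = 1/2 - real (Suc k)" by simp
    ultimately show ?thesis by (simp add: algebra_simps)
  qed
  then have "(GG S e k has_real_derivative (\<Sum>n\<in>S. (1/2 - real k) * (e n * (- Bc n) ^ Suc k * (Ac n - Bc n * \<beta>) powr (1/2 - real (Suc k))))) (at \<beta>)"
    unfolding GG_def by (intro DERIV_sum) auto
  then show ?thesis unfolding GG_def by (simp add: sum_distrib_left)
qed

lemma GG_zero:
  assumes "0 \<notin> S" "0 \<le> a" "b \<le> 15" "\<forall>\<beta>\<in>{a<..<b}. GG S e 0 \<beta> = 0"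
  shows "\<forall>\<beta>\<in>{a<..<b}. GG S e k \<beta> = 0"
proof (induction k)
  case 0 then show ?case using assms by simp
next
  case (Suc k)
  show ?case
  proof
    fix \<beta> assume b: "\<beta> \<in> {a<..<b}"
    have d1: "(GG S e k has_real_derivative (1/2 - real k) * GG S e (Suc k) \<beta>) (at \<beta>)"
      using GG_deriv[OF assms(1)] b assms by auto
    have d0: "((\<lambda>_. 0) has_real_derivative 0) (at \<beta>)" by simp
    have d2: "(GG S e k has_real_derivative 0) (at \<beta>)"
      by (rule has_field_derivative_transform_within_open[OF d0, where S="{a<..<b}"]) (use b Suc in auto)
    have "(1/2 - real k) * GG S e (Suc k) \<beta> = 0" using DERIV_unique[OF d1 d2] .
    moreover have "1/2 - real k \<noteq> 0" by (cases k) auto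
    ultimately show "GG S e (Suc k) \<beta> = 0" by simp
  qed
qed

lemma vander:
  fixes x z :: "nat \<Rightarrow> real"
  assumes fin: "finite S" and van: "\<forall>k. (\<Sum>n\<in>S. x n * z n ^ k) = 0" and m: "m \<in> S"
  shows "(\<Sum>n\<in>{n\<in>S. z n = z m}. x n) = 0"
proof -
  have P: "(\<Sum>n\<in>S. x n * poly p (z n)) = 0" for p
  proof -
    have "(\<Sum>n\<in>S. x n * poly p (z n)) = (\<Sum>n\<in>S. \<Sum>i\<le>degree p. coeff p i * (x n * z n ^ i))"
      by (simp add: poly_altdef sum_distrib_left algebra_simps)
    also have "\<dots> = (\<Sum>i\<le>degree p. coeff p i * (\<Sum>n\<in>S. x n * z n ^ i))"
      by (subst sum.swap) (simp add: sum_distrib_left)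
    also have "\<dots> = 0" using van by simp
    finally show ?thesis .
  qed
  define Y where "Y = z ` S - {z m}"
  have finY: "finite Y" using fin unfolding Y_def by simp
  define p where "p = (\<Prod>y\<in>Y. [:- y, 1:])"
  have pv: "poly p t = (\<Prod>y\<in>Y. t - y)" for t unfolding p_def by (simp add: poly_prod)
  define C where "C = poly p (z m)"
  have C0: "C \<noteq> 0" unfolding C_def pv using finY by (auto simp: Y_def)
  have "(\<Sum>n\<in>S. x n * poly p (z n)) = (\<Sum>n\<in>S. if z n = z m then x n * C else 0)"
  proof (rule sum.cong)
    fix n assume n: "n \<in> S"
    show "x n * poly p (z n) = (if z n = z m then x n * C else 0)"
    proof (cases "z n = z m")
      case False
      then have "z n \<in> Y" using n unfolding Y_def by auto
      then have "poly p (z n) = 0" unfolding pv using finY by (auto intro: prod_zero)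
      then show ?thesis using False by simp
    qed (simp add: C_def)
  qed simp
  also have "\<dots> = (\<Sum>n\<in>{n\<in>S. z n = z m}. x n) * C"
    by (simp add: sum.inter_filter[OF fin, symmetric] sum_distrib_right)
  finally show ?thesis using P[of p] C0 by simp
qed

lemma cls:
  assumes "n \<ge> 1" "m \<ge> 1" "n \<noteq> m" "Bc n * Ac m = Bc m * Ac n"
  shows "(n = 3 \<and> m = 5) \<or> (n = 5 \<and> m = 3)"
proof -
  have "Bc n * Ac m - Bc m * Ac n = 2 * real n * real m * (real m - real n) * (real n * real m - 2 * real m - 2 * real n + 1)"
    unfolding Ac_def Bc_def by (simp add: algebra_simps power3_eq_cube)
  then have "2 * real n * real m * (real m - real n) * (real n * real m - 2 * real m - 2 * real n + 1) = 0"
    using assms(4) by simp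
  moreover have "real m - real n \<noteq> 0" using assms(3) by simp
  ultimately have "real n * real m - 2 * real m - 2 * real n + 1 = 0" using assms(1,2) by simp
  then have "real_of_int ((int n - 2) * (int m - 2)) = real_of_int 3" by (simp add: algebra_simps)
  then have e: "(int n - 2) * (int m - 2) = 3" by (simp only: of_int_eq_iff)
  define u where "u = int n - 2"
  define v where "v = int m - 2"
  have e2: "u * v = 3" using e unfolding u_def v_def .
  have u1: "u \<ge> -1" "v \<ge> -1" using assms unfolding u_def v_def by auto
  have "u \<ge> 1"
  proof (rule ccontr)
    assume "\<not> u \<ge> 1" then have "u = 0 \<or> u = -1" using u1 by auto
    then show False using e2 u1 by auto
  qed
  moreover have "v \<ge> 1"
  proof (rule ccontr)
    assume "\<not> v \<ge> 1" then have "v = 0 \<or> v = -1" using u1 by auto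
    then show False using e2 u1 by auto
  qed
  moreover have "u \<le> 3"
  proof -
    have "u * 1 \<le> u * v" using \<open>v \<ge> 1\<close> \<open>u \<ge> 1\<close> by (intro mult_left_mono) auto
    then show ?thesis using e2 by simp
  qed
  ultimately have "u = 1 \<or> u = 2 \<or> u = 3" by auto
  then have "(u = 1 \<and> v = 3) \<or> (u = 3 \<and> v = 1)"
  proof (elim disjE)
    assume "u = 2" then have "2 * v = 3" using e2 by simp
    then show ?thesis by presburger
  qed (use e2 in auto)
  then show ?thesis unfolding u_def v_def by auto
qed

lemma sqrt5_irr: "sqrt (real (5::nat)) \<notin> \<rat>"
proof
  have p: "prime (5::nat)" by simp
  assume "sqrt (real (5::nat)) \<in> \<rat>"
  then obtain m n :: nat
    where n: "n \<noteq> 0"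
      and sqrt_rat: "\<bar>sqrt (real (5::nat))\<bar> = m / n"
      and "coprime m n" by (rule Rats_abs_nat_div_natE)
  have eq: "m\<^sup>2 = 5 * n\<^sup>2"
  proof -
    from n and sqrt_rat have "real m = \<bar>sqrt 5\<bar> * real n" by simp
    then have "real (m\<^sup>2) = (sqrt 5)\<^sup>2 * real (n\<^sup>2)" by (simp add: power_mult_distrib)
    also have "(sqrt 5)\<^sup>2 = (5::real)" by simp
    finally have "real (m\<^sup>2) = real (5 * n\<^sup>2)" by simp
    then show ?thesis by (simp only: of_nat_eq_iff)
  qed
  have "5 dvd m \<and> 5 dvd n"
  proof
    from eq have "5 dvd m\<^sup>2" by simp
    with p show "5 dvd m" by (rule prime_dvd_power)
    then obtain k where "m = 5 * k" ..
    with eq have "5 * n\<^sup>2 = 5\<^sup>2 * k\<^sup>2" by algebra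
    then have "n\<^sup>2 = 5 * k\<^sup>2" by (simp add: power2_eq_square)
    then have "5 dvd n\<^sup>2" by simp
    with p show "5 dvd n" by (rule prime_dvd_power)
  qed
  then have "5 dvd gcd m n" by simp
  with \<open>coprime m n\<close> show False by simp
qed



lemma rr5: "rr 5 \<beta> = sqrt 5 * rr 3 \<beta>"
proof -
  have "Ac 5 - Bc 5 * \<beta> = 5 * (Ac 3 - Bc 3 * \<beta>)" unfolding Ac_def Bc_def by simp
  then show ?thesis unfolding rr_def by (simp only: real_sqrt_mult)
qed

lemma lin_indep:
  assumes fin: "finite S" and S0: "0 \<notin> S" and ints: "\<forall>n\<in>S. e n \<in> \<int>"
    and ab: "0 \<le> a" "a < b" "b \<le> 15"
    and z: "\<forall>\<beta>\<in>{a<..<b}. (\<Sum>n\<in>S. e n * rr n \<beta>) = 0"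
  shows "\<forall>n\<in>S. e n = 0"
proof -
  have n1: "n \<ge> 1" if "n \<in> S" for n using that S0 by (cases n) auto
  have G0: "\<forall>\<beta>\<in>{a<..<b}. GG S e 0 \<beta> = 0"
  proof
    fix \<beta> assume b: "\<beta> \<in> {a<..<b}"
    have "GG S e 0 \<beta> = (\<Sum>n\<in>S. e n * rr n \<beta>)"
      unfolding GG_def rr_def
    proof (rule sum.cong)
      fix n assume "n \<in> S"
      have "0 \<le> Ac n - Bc n * \<beta>" using R_nonneg[of \<beta> n] b ab by auto
      then show "e n * (- Bc n) ^ 0 * (Ac n - Bc n * \<beta>) powr (1 / 2 - real 0) = e n * sqrt (Ac n - Bc n * \<beta>)"
        by (simp add: powr_half_sqrt)
    qed simp
    then show "GG S e 0 \<beta> = 0" using z b by simp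
  qed
  define \<beta>0 where "\<beta>0 = (a + b) / 2"
  have b0: "\<beta>0 \<in> {a<..<b}" using ab unfolding \<beta>0_def by auto
  have b0': "0 < \<beta>0" "\<beta>0 < 15" using b0 ab by auto
  have Gk: "GG S e k \<beta>0 = 0" for k using GG_zero[OF S0 ab(1) ab(3) G0] b0 by blast
  define P where "P n = Ac n - Bc n * \<beta>0" for n
  have Ppos: "P n > 0" if "n \<in> S" for n using R_pos[OF b0' n1[OF that]] unfolding P_def .
  define x where "x n = e n * rr n \<beta>0" for n
  define zz where "zz n = - Bc n / P n" for n
  have van: "\<forall>k. (\<Sum>n\<in>S. x n * zz n ^ k) = 0"
  proof
    fix k
    have "GG S e k \<beta>0 = (\<Sum>n\<in>S. x n * zz n ^ k)"
      unfolding GG_def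
    proof (rule sum.cong)
      fix n assume n: "n \<in> S"
      have pp: "P n > 0" using Ppos n .
      have "P n powr (1/2 - real k) = P n powr (1/2) / P n powr (real k)"
        by (rule powr_diff)
      also have "\<dots> = sqrt (P n) / P n ^ k" using pp by (simp add: powr_half_sqrt powr_realpow)
      finally have "P n powr (1/2 - real k) = sqrt (P n) / P n ^ k" .
      moreover have h: "(- (Bc n / P n)) ^ k = (- Bc n) ^ k / P n ^ k" by (metis minus_divide_left power_divide)
      ultimately show "e n * (- Bc n) ^ k * (Ac n - Bc n * \<beta>0) powr (1 / 2 - real k) = x n * zz n ^ k"
        unfolding x_def zz_def rr_def P_def[symmetric] by simp
    qed simp
    then show "(\<Sum>n\<in>S. x n * zz n ^ k) = 0" using Gk by simp
  qed
  have cl: "(\<Sum>n\<in>{n\<in>S. zz n = zz m}. x n) = 0" if "m \<in> S" for m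
    using vander[OF fin van that] .
  have zzeq: "zz n = zz m \<longleftrightarrow> Bc n * Ac m = Bc m * Ac n" if "n \<in> S" "m \<in> S" for n m
  proof -
    have "zz n = zz m \<longleftrightarrow> Bc n * P m = Bc m * P n"
      unfolding zz_def using Ppos[OF that(1)] Ppos[OF that(2)] by (auto simp: field_simps)
    also have "\<dots> \<longleftrightarrow> Bc n * Ac m = Bc m * Ac n" unfolding P_def by (auto simp: algebra_simps)
    finally show ?thesis .
  qed
  have single: "e m = 0" if m: "m \<in> S" and sg: "{n\<in>S. zz n = zz m} = {m}" for m
  proof -
    have "x m = 0" using cl[OF m] sg by simp
    moreover have "rr m \<beta>0 > 0" using rr_pos[OF b0' n1[OF m]] .
    ultimately show ?thesis unfolding x_def by simp
  qed
  show ?thesis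
  proof
    fix m assume m: "m \<in> S"
    show "e m = 0"
    proof (cases "m \<in> {3,5} \<and> {3,5} \<subseteq> S")
      case False
      have "{n\<in>S. zz n = zz m} = {m}"
      proof (intro set_eqI iffI)
        fix n assume n: "n \<in> {n\<in>S. zz n = zz m}"
        show "n \<in> {m}"
        proof (rule ccontr)
          assume "n \<notin> {m}"
          then have "(n = 3 \<and> m = 5) \<or> (n = 5 \<and> m = 3)"
            using cls[of n m] n1 n m zzeq by auto
          then show False using False n m by auto
        qed
      qed (use m in auto)
      then show ?thesis using single m by blast
    next
      case True
      have "{n\<in>S. zz n = zz m} = {3,5}"
      proof (intro set_eqI iffI)
        fix n assume n: "n \<in> {n\<in>S. zz n = zz m}"
        show "n \<in> {3,5}"
        proof (rule ccontr)
          assume nn: "n \<notin> {3,5}"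
          then have "n \<noteq> m" using True by auto
          then have "(n = 3 \<and> m = 5) \<or> (n = 5 \<and> m = 3)"
            using cls[of n m] n1 n m zzeq by auto
          then show False using nn by auto
        qed
      next
        fix n :: nat assume n: "n \<in> {3,5}"
        have "zz 3 = zz 5" using zzeq[of 3 5] True unfolding Ac_def Bc_def by auto
        then show "n \<in> {n\<in>S. zz n = zz m}" using n True by auto
      qed
      then have "x 3 + x 5 = 0" using cl[OF m] by simp
      then have "(e 3 + sqrt 5 * e 5) * rr 3 \<beta>0 = 0" unfolding x_def rr5 by (simp add: algebra_simps)
      moreover have "rr 3 \<beta>0 > 0" using rr_pos[OF b0'] by simp
      ultimately have e35: "e 3 + sqrt 5 * e 5 = 0" by simp
      have "e 5 = 0"
      proof (rule ccontr)
        assume ne: "e 5 \<noteq> 0"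
        have "sqrt 5 = - e 3 / e 5" using e35 ne by (simp add: field_simps)
        moreover have "e 3 \<in> \<rat>" "e 5 \<in> \<rat>" using ints True Ints_subset_Rats by auto
        ultimately have "sqrt (real (5::nat)) \<in> \<rat>" by simp
        then show False using sqrt5_irr by blast
      qed
      then have "e 3 = 0" using e35 by simp
      then show ?thesis using \<open>e 5 = 0\<close> True by auto
    qed
  qed
qed



definition intpoly :: "real poly \<Rightarrow> bool" where "intpoly p \<longleftrightarrow> (\<forall>i. coeff p i \<in> \<int>)"

lemma intpoly_add: "intpoly p \<Longrightarrow> intpoly q \<Longrightarrow> intpoly (p + q)"
  unfolding intpoly_def by (auto simp: coeff_add)

lemma intpoly_mult: "intpoly p \<Longrightarrow> intpoly q \<Longrightarrow> intpoly (p * q)"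
  unfolding intpoly_def by (auto simp: coeff_mult intro!: Ints_sum Ints_mult)

lemma intpoly_minus: "intpoly p \<Longrightarrow> intpoly (- p)"
  unfolding intpoly_def by (auto simp: coeff_minus)

lemma intpoly_const: "c \<in> \<int> \<Longrightarrow> intpoly [:c:]"
  unfolding intpoly_def by (auto simp: coeff_pCons split: nat.splits)

definition Rp :: "nat \<Rightarrow> real poly" where "Rp n = [: Ac n, - Bc n :]"

lemma poly_Rp: "poly (Rp n) \<beta> = Ac n - Bc n * \<beta>"
  unfolding Rp_def by (simp add: algebra_simps)

lemma intpoly_Rp: "intpoly (Rp n)"
  unfolding intpoly_def Rp_def Ac_def Bc_def
  by (auto simp: coeff_pCons split: nat.splits intro!: Ints_diff Ints_mult Ints_power)

lemma degree_Rp: "degree (Rp n) \<le> 1"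
  unfolding Rp_def by simp

definition valid :: "(nat \<Rightarrow> real) \<Rightarrow> real \<Rightarrow> bool" where
  "valid \<rho> \<beta> \<longleftrightarrow> (\<forall>n. (\<rho> n)^2 = poly (Rp n) \<beta>)"

lemma valid_flip: "valid \<rho> \<beta> \<Longrightarrow> valid (\<rho>(m := - \<rho> m)) \<beta>"
  unfolding valid_def by auto

inductive Phi :: "nat set \<Rightarrow> ((nat \<Rightarrow> real) \<Rightarrow> real \<Rightarrow> real) \<Rightarrow> nat \<Rightarrow> bool" for T where
  pol: "intpoly p \<Longrightarrow> 2 * degree p \<le> k \<Longrightarrow> Phi T (\<lambda>\<rho> \<beta>. poly p \<beta>) k"
| var: "n \<in> T \<Longrightarrow> 1 \<le> k \<Longrightarrow> Phi T (\<lambda>\<rho> \<beta>. \<rho> n) k"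
| add: "Phi T f k \<Longrightarrow> Phi T g k \<Longrightarrow> Phi T (\<lambda>\<rho> \<beta>. f \<rho> \<beta> + g \<rho> \<beta>) k"
| mul: "Phi T f k1 \<Longrightarrow> Phi T g k2 \<Longrightarrow> k1 + k2 \<le> k \<Longrightarrow> Phi T (\<lambda>\<rho> \<beta>. f \<rho> \<beta> * g \<rho> \<beta>) k"

lemma Phi_const: "c \<in> \<int> \<Longrightarrow> Phi T (\<lambda>\<rho> \<beta>. c) k"
  using Phi.pol[of "[:c:]" k T] intpoly_const[of c] by simp

lemma Phi_zero: "Phi T (\<lambda>\<rho> \<beta>. 0) k"
  using Phi_const[of 0] by simp

lemma Phi_mono: "Phi T f k \<Longrightarrow> k \<le> k' \<Longrightarrow> Phi T f k'"
proof (induction arbitrary: k' rule: Phi.induct)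
  case (pol p k) then show ?case by (intro Phi.pol) auto
next
  case (var n k) then show ?case by (intro Phi.var) auto
next
  case (add f k g) then show ?case by (intro Phi.add) auto
next
  case (mul f k1 g k2 k) then show ?case by (intro Phi.mul[of T f k1 g k2]) auto
qed

lemma Phi_indep: "Phi T f k \<Longrightarrow> (\<forall>n\<in>T. \<rho> n = \<rho>' n) \<Longrightarrow> f \<rho> \<beta> = f \<rho>' \<beta>"
  by (induction rule: Phi.induct) auto

lemma mulB:
  assumes "Phi T X j" "Phi T B (k - 1)" "k = 0 \<longrightarrow> B = (\<lambda>\<rho> \<beta>. 0)" "j + k \<le> l + 1"
  shows "Phi T (\<lambda>\<rho> \<beta>. X \<rho> \<beta> * B \<rho> \<beta>) l"
proof (cases "k = 0")
  case True then show ?thesis using assms Phi_zero by simp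
next
  case False then show ?thesis using assms by (intro Phi.mul[of T X j B "k - 1"]) auto
qed

lemma Phi_decomp:
  assumes "Phi T' f k" "T' = insert m T" "m \<notin> T"
  shows "\<exists>A B. Phi T A k \<and> Phi T B (k - 1) \<and> (k = 0 \<longrightarrow> B = (\<lambda>\<rho> \<beta>. 0)) \<and>
           (\<forall>\<rho> \<beta>. valid \<rho> \<beta> \<longrightarrow> f \<rho> \<beta> = A \<rho> \<beta> + \<rho> m * B \<rho> \<beta>)"
  using assms
proof (induction rule: Phi.induct)
  case (pol p k)
  show ?case
    by (rule exI[of _ "\<lambda>\<rho> \<beta>. poly p \<beta>"], rule exI[of _ "\<lambda>\<rho> \<beta>. 0"]) (use pol in \<open>auto intro: Phi.pol Phi_zero\<close>)
next
  case (var n k)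
  show ?case
  proof (cases "n = m")
    case True
    show ?thesis
      by (rule exI[of _ "\<lambda>\<rho> \<beta>. 0"], rule exI[of _ "\<lambda>\<rho> \<beta>. 1"]) (use var True in \<open>auto intro: Phi_zero Phi_const\<close>)
  next
    case False
    then have "n \<in> T" using var by auto
    then show ?thesis
      by (intro exI[of _ "\<lambda>\<rho> \<beta>. \<rho> n"] exI[of _ "\<lambda>\<rho> \<beta>. 0"]) (use var in \<open>auto intro: Phi.var Phi_zero\<close>)
  qed
next
  case (add f k g)
  obtain A1 B1 where 1: "Phi T A1 k" "Phi T B1 (k - 1)" "k = 0 \<longrightarrow> B1 = (\<lambda>\<rho> \<beta>. 0)"
    "\<forall>\<rho> \<beta>. valid \<rho> \<beta> \<longrightarrow> f \<rho> \<beta> = A1 \<rho> \<beta> + \<rho> m * B1 \<rho> \<beta>" using add by blast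
  obtain A2 B2 where 2: "Phi T A2 k" "Phi T B2 (k - 1)" "k = 0 \<longrightarrow> B2 = (\<lambda>\<rho> \<beta>. 0)"
    "\<forall>\<rho> \<beta>. valid \<rho> \<beta> \<longrightarrow> g \<rho> \<beta> = A2 \<rho> \<beta> + \<rho> m * B2 \<rho> \<beta>" using add by blast
  show ?case
    by (rule exI[of _ "\<lambda>\<rho> \<beta>. A1 \<rho> \<beta> + A2 \<rho> \<beta>"], rule exI[of _ "\<lambda>\<rho> \<beta>. B1 \<rho> \<beta> + B2 \<rho> \<beta>"])
      (use 1 2 in \<open>auto intro: Phi.add simp: algebra_simps\<close>)
next
  case (mul f k1 g k2 k)
  obtain A1 B1 where 1: "Phi T A1 k1" "Phi T B1 (k1 - 1)" "k1 = 0 \<longrightarrow> B1 = (\<lambda>\<rho> \<beta>. 0)"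
    "\<forall>\<rho> \<beta>. valid \<rho> \<beta> \<longrightarrow> f \<rho> \<beta> = A1 \<rho> \<beta> + \<rho> m * B1 \<rho> \<beta>" using mul by blast
  obtain A2 B2 where 2: "Phi T A2 k2" "Phi T B2 (k2 - 1)" "k2 = 0 \<longrightarrow> B2 = (\<lambda>\<rho> \<beta>. 0)"
    "\<forall>\<rho> \<beta>. valid \<rho> \<beta> \<longrightarrow> g \<rho> \<beta> = A2 \<rho> \<beta> + \<rho> m * B2 \<rho> \<beta>" using mul by blast
  have R: "Phi T (\<lambda>\<rho> \<beta>. poly (Rp m) \<beta>) 2" using degree_Rp[of m] intpoly_Rp[of m] by (intro Phi.pol) auto
  have RB1: "Phi T (\<lambda>\<rho> \<beta>. poly (Rp m) \<beta> * B1 \<rho> \<beta>) (k1 + 1)"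
    by (rule mulB[OF R 1(2) 1(3)]) simp
  have RBB: "Phi T (\<lambda>\<rho> \<beta>. poly (Rp m) \<beta> * B1 \<rho> \<beta> * B2 \<rho> \<beta>) k"
    by (rule mulB[OF RB1 2(2) 2(3)]) (use mul in simp)
  have AA: "Phi T (\<lambda>\<rho> \<beta>. A1 \<rho> \<beta> * A2 \<rho> \<beta>) k" using 1(1) 2(1) mul by (intro Phi.mul[of T A1 k1 A2 k2]) auto
  have AB: "Phi T (\<lambda>\<rho> \<beta>. A1 \<rho> \<beta> * B2 \<rho> \<beta>) (k - 1)"
    by (rule mulB[OF 1(1) 2(2) 2(3)]) (use mul in simp)
  have BA: "Phi T (\<lambda>\<rho> \<beta>. A2 \<rho> \<beta> * B1 \<rho> \<beta>) (k - 1)"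
    by (rule mulB[OF 2(1) 1(2) 1(3)]) (use mul in simp)
  have Bz: "k = 0 \<longrightarrow> (\<lambda>\<rho> \<beta>. A1 \<rho> \<beta> * B2 \<rho> \<beta> + A2 \<rho> \<beta> * B1 \<rho> \<beta>) = (\<lambda>\<rho> \<beta>. 0)"
    using 1(3) 2(3) mul by auto
  show ?case
  proof (intro exI conjI)
    show "Phi T (\<lambda>\<rho> \<beta>. A1 \<rho> \<beta> * A2 \<rho> \<beta> + poly (Rp m) \<beta> * B1 \<rho> \<beta> * B2 \<rho> \<beta>) k"
      using AA RBB by (rule Phi.add)
    show "Phi T (\<lambda>\<rho> \<beta>. A1 \<rho> \<beta> * B2 \<rho> \<beta> + A2 \<rho> \<beta> * B1 \<rho> \<beta>) (k - 1)"
      using AB BA by (rule Phi.add)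
    show "k = 0 \<longrightarrow> (\<lambda>\<rho> \<beta>. A1 \<rho> \<beta> * B2 \<rho> \<beta> + A2 \<rho> \<beta> * B1 \<rho> \<beta>) = (\<lambda>\<rho> \<beta>. 0)" using Bz .
    show "\<forall>\<rho> \<beta>. valid \<rho> \<beta> \<longrightarrow> f \<rho> \<beta> * g \<rho> \<beta> =
        (A1 \<rho> \<beta> * A2 \<rho> \<beta> + poly (Rp m) \<beta> * B1 \<rho> \<beta> * B2 \<rho> \<beta>) + \<rho> m * (A1 \<rho> \<beta> * B2 \<rho> \<beta> + A2 \<rho> \<beta> * B1 \<rho> \<beta>)"
    proof (intro allI impI)
      fix \<rho> \<beta> assume v: "valid \<rho> \<beta>"
      have sq: "poly (Rp m) \<beta> = \<rho> m * \<rho> m" using v unfolding valid_def by (simp add: power2_eq_square)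
      show "f \<rho> \<beta> * g \<rho> \<beta> =
        (A1 \<rho> \<beta> * A2 \<rho> \<beta> + poly (Rp m) \<beta> * B1 \<rho> \<beta> * B2 \<rho> \<beta>) + \<rho> m * (A1 \<rho> \<beta> * B2 \<rho> \<beta> + A2 \<rho> \<beta> * B1 \<rho> \<beta>)"
        using 1(4) 2(4) v unfolding sq by (simp add: algebra_simps)
    qed
  qed
qed

lemma Phi_empty_poly:
  "Phi T f k \<Longrightarrow> T = {} \<Longrightarrow> \<exists>p. intpoly p \<and> 2 * degree p \<le> k \<and> (\<forall>\<rho> \<beta>. f \<rho> \<beta> = poly p \<beta>)"
proof (induction rule: Phi.induct)
  case (pol p k) then show ?case by auto
next
  case (var n k) then show ?case by auto
next
  case (add f k g)
  then obtain p q where "intpoly p" "2 * degree p \<le> k" "\<forall>\<rho> \<beta>. f \<rho> \<beta> = poly p \<beta>"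
     "intpoly q" "2 * degree q \<le> k" "\<forall>\<rho> \<beta>. g \<rho> \<beta> = poly q \<beta>" by blast
  then show ?case
  proof (intro exI[of _ "p + q"] conjI)
    have "degree (p + q) \<le> max (degree p) (degree q)" by (rule degree_add_le) auto
    then show "2 * degree (p + q) \<le> k" using \<open>2 * degree p \<le> k\<close> \<open>2 * degree q \<le> k\<close> by linarith
  qed (auto simp: intpoly_add)
next
  case (mul f k1 g k2 k)
  then obtain p q where "intpoly p" "2 * degree p \<le> k1" "\<forall>\<rho> \<beta>. f \<rho> \<beta> = poly p \<beta>"
     "intpoly q" "2 * degree q \<le> k2" "\<forall>\<rho> \<beta>. g \<rho> \<beta> = poly q \<beta>" by blast
  moreover have "degree (p * q) \<le> degree p + degree q" by (rule degree_mult_le)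
  ultimately show ?case using mul(3)
    by (intro exI[of _ "p * q"]) (auto simp: intpoly_mult)
qed

lemma Phi_step:
  assumes "Phi (insert m T) f k" "m \<notin> T"
  shows "\<exists>h. Phi T h (2 * k) \<and> (\<forall>\<rho> \<beta>. valid \<rho> \<beta> \<longrightarrow> f \<rho> \<beta> * f (\<rho>(m := - \<rho> m)) \<beta> = h \<rho> \<beta>)"
proof -
  obtain A B where AB: "Phi T A k" "Phi T B (k - 1)" "k = 0 \<longrightarrow> B = (\<lambda>\<rho> \<beta>. 0)"
    "\<forall>\<rho> \<beta>. valid \<rho> \<beta> \<longrightarrow> f \<rho> \<beta> = A \<rho> \<beta> + \<rho> m * B \<rho> \<beta>"
    using Phi_decomp[OF assms(1) refl assms(2)] by blast
  have R: "Phi T (\<lambda>\<rho> \<beta>. poly (- Rp m) \<beta>) 2" using degree_Rp[of m] intpoly_Rp[of m]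
    by (intro Phi.pol) (auto simp: intpoly_minus)
  have RB: "Phi T (\<lambda>\<rho> \<beta>. poly (- Rp m) \<beta> * B \<rho> \<beta>) (k + 1)"
    by (rule mulB[OF R AB(2) AB(3)]) simp
  have RBB: "Phi T (\<lambda>\<rho> \<beta>. poly (- Rp m) \<beta> * B \<rho> \<beta> * B \<rho> \<beta>) (2 * k)"
    by (rule mulB[OF RB AB(2) AB(3)]) simp
  have AA: "Phi T (\<lambda>\<rho> \<beta>. A \<rho> \<beta> * A \<rho> \<beta>) (2 * k)" using AB(1) by (intro Phi.mul[of T A k A k]) auto
  show ?thesis
  proof (intro exI conjI allI impI)
    show "Phi T (\<lambda>\<rho> \<beta>. A \<rho> \<beta> * A \<rho> \<beta> + poly (- Rp m) \<beta> * B \<rho> \<beta> * B \<rho> \<beta>) (2 * k)"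
      using AA RBB by (rule Phi.add)
    fix \<rho> \<beta> assume v: "valid \<rho> \<beta>"
    have v': "valid (\<rho>(m := - \<rho> m)) \<beta>" using valid_flip[OF v] .
    have ag: "\<forall>n\<in>T. \<rho> n = (\<rho>(m := - \<rho> m)) n" using assms(2) by auto
    have Aeq: "A (\<rho>(m := - \<rho> m)) \<beta> = A \<rho> \<beta>" by (rule sym, rule Phi_indep[OF AB(1) ag])
    have Beq: "B (\<rho>(m := - \<rho> m)) \<beta> = B \<rho> \<beta>" by (rule sym, rule Phi_indep[OF AB(2) ag])
    have f1: "f \<rho> \<beta> = A \<rho> \<beta> + \<rho> m * B \<rho> \<beta>" using AB(4) v by blast
    have f2: "f (\<rho>(m := - \<rho> m)) \<beta> = A \<rho> \<beta> - \<rho> m * B \<rho> \<beta>" using AB(4) v' Aeq Beq by simp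
    have sq: "poly (Rp m) \<beta> = \<rho> m * \<rho> m" using v unfolding valid_def by (simp add: power2_eq_square)
    show "f \<rho> \<beta> * f (\<rho>(m := - \<rho> m)) \<beta> = A \<rho> \<beta> * A \<rho> \<beta> + poly (- Rp m) \<beta> * B \<rho> \<beta> * B \<rho> \<beta>"
      unfolding f1 f2 poly_minus sq by (simp add: algebra_simps)
  qed
qed

fun elim :: "nat list \<Rightarrow> ((nat \<Rightarrow> real) \<Rightarrow> real \<Rightarrow> real) \<Rightarrow> (nat \<Rightarrow> real) \<Rightarrow> real \<Rightarrow> real" where
  "elim [] f = f"
| "elim (m # ms) f = elim ms (\<lambda>\<rho> \<beta>. f \<rho> \<beta> * f (\<rho>(m := - \<rho> m)) \<beta>)"

lemma elim_cong:
  "(\<forall>\<rho> \<beta>. valid \<rho> \<beta> \<longrightarrow> f \<rho> \<beta> = g \<rho> \<beta>) \<Longrightarrow> valid \<rho> \<beta> \<Longrightarrow> elim ms f \<rho> \<beta> = elim ms g \<rho> \<beta>"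
proof (induction ms arbitrary: f g \<rho>)
  case Nil then show ?case by simp
next
  case (Cons m ms)
  show ?case unfolding elim.simps
  proof (rule Cons.IH)
    show "\<forall>\<rho> \<beta>. valid \<rho> \<beta> \<longrightarrow> f \<rho> \<beta> * f (\<rho>(m := - \<rho> m)) \<beta> = g \<rho> \<beta> * g (\<rho>(m := - \<rho> m)) \<beta>"
    proof (intro allI impI)
      fix \<rho>' \<beta>' assume v: "valid \<rho>' \<beta>'"
      have v2: "valid (\<rho>'(m := - \<rho>' m)) \<beta>'" using valid_flip[OF v] .
      have e1: "f \<rho>' \<beta>' = g \<rho>' \<beta>'" using Cons.prems(1) v by blast
      have e2: "f (\<rho>'(m := - \<rho>' m)) \<beta>' = g (\<rho>'(m := - \<rho>' m)) \<beta>'" using Cons.prems(1) v2 by blast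
      show "f \<rho>' \<beta>' * f (\<rho>'(m := - \<rho>' m)) \<beta>' = g \<rho>' \<beta>' * g (\<rho>'(m := - \<rho>' m)) \<beta>'"
        by (simp only: e1 e2)
    qed
  qed (use Cons.prems in auto)
qed

lemma elim_poly:
  "distinct ms \<Longrightarrow> Phi (set ms) f k \<Longrightarrow>
    \<exists>p. intpoly p \<and> 2 * degree p \<le> 2 ^ length ms * k \<and> (\<forall>\<rho> \<beta>. valid \<rho> \<beta> \<longrightarrow> elim ms f \<rho> \<beta> = poly p \<beta>)"
proof (induction ms arbitrary: f k)
  case Nil then show ?case using Phi_empty_poly[of "{}" f k] by auto
next
  case (Cons m ms)
  obtain h where h: "Phi (set ms) h (2 * k)"
      "\<forall>\<rho> \<beta>. valid \<rho> \<beta> \<longrightarrow> f \<rho> \<beta> * f (\<rho>(m := - \<rho> m)) \<beta> = h \<rho> \<beta>"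
    using Phi_step[of m "set ms" f k] Cons.prems by auto
  obtain p where p: "intpoly p" "2 * degree p \<le> 2 ^ length ms * (2 * k)"
      "\<forall>\<rho> \<beta>. valid \<rho> \<beta> \<longrightarrow> elim ms h \<rho> \<beta> = poly p \<beta>"
    using Cons.IH[OF _ h(1)] Cons.prems by auto
  show ?case
  proof (intro exI conjI allI impI)
    show "intpoly p" by fact
    show "2 * degree p \<le> 2 ^ length (m # ms) * k" using p(2) by (simp add: algebra_simps)
    fix \<rho> \<beta> assume v: "valid \<rho> \<beta>"
    have "elim (m # ms) f \<rho> \<beta> = elim ms h \<rho> \<beta>"
      unfolding elim.simps by (rule elim_cong[OF h(2) v])
    then show "elim (m # ms) f \<rho> \<beta> = poly p \<beta>" using p(3) v by simp
  qed
qed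

lemma elim_bound:
  assumes "0 \<le> K" "\<forall>\<rho>'. (\<forall>n. \<bar>\<rho>' n\<bar> = \<bar>\<rho> n\<bar>) \<longrightarrow> \<bar>f \<rho>' \<beta>\<bar> \<le> K"
  shows "\<bar>elim ms f \<rho> \<beta>\<bar> \<le> \<bar>f \<rho> \<beta>\<bar> * K ^ (2 ^ length ms - 1)"
  using assms
proof (induction ms arbitrary: f K)
  case Nil then show ?case by simp
next
  case (Cons m ms)
  define f' where "f' = (\<lambda>\<rho> \<beta>. f \<rho> \<beta> * f (\<rho>(m := - \<rho> m)) \<beta>)"
  have b: "\<forall>\<rho>'. (\<forall>n. \<bar>\<rho>' n\<bar> = \<bar>\<rho> n\<bar>) \<longrightarrow> \<bar>f' \<rho>' \<beta>\<bar> \<le> K^2"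
  proof (intro allI impI)
    fix \<rho>' assume a: "\<forall>n. \<bar>\<rho>' n\<bar> = \<bar>\<rho> n\<bar>"
    have a2: "\<forall>n. \<bar>(\<rho>'(m := - \<rho>' m)) n\<bar> = \<bar>\<rho> n\<bar>" using a by auto
    have "\<bar>f \<rho>' \<beta>\<bar> \<le> K" "\<bar>f (\<rho>'(m := - \<rho>' m)) \<beta>\<bar> \<le> K" using Cons.prems a a2 by blast+
    then show "\<bar>f' \<rho>' \<beta>\<bar> \<le> K^2" unfolding f'_def abs_mult power2_eq_square
      by (intro mult_mono) auto
  qed
  have "\<bar>elim ms f' \<rho> \<beta>\<bar> \<le> \<bar>f' \<rho> \<beta>\<bar> * (K^2) ^ (2 ^ length ms - 1)"
    using Cons.IH[of "K^2" f'] b by simp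
  also have "\<dots> = \<bar>f \<rho> \<beta>\<bar> * (\<bar>f (\<rho>(m := - \<rho> m)) \<beta>\<bar> * K ^ (2 * (2 ^ length ms - 1)))"
    unfolding f'_def abs_mult by (simp add: power_mult)
  also have "\<dots> \<le> \<bar>f \<rho> \<beta>\<bar> * (K * K ^ (2 * (2 ^ length ms - 1)))"
  proof -
    have "\<bar>f (\<rho>(m := - \<rho> m)) \<beta>\<bar> \<le> K" using Cons.prems(2) by auto
    then show ?thesis using Cons.prems(1) by (intro mult_left_mono mult_right_mono) auto
  qed
  also have "K * K ^ (2 * (2 ^ length ms - 1)) = K ^ (2 ^ length (m # ms) - 1)"
  proof -
    have x1: "(2::nat) ^ length ms \<ge> 1" by simp
    have x2: "(2::nat) ^ length (m # ms) = 2 * 2 ^ length ms" by simp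
    have "Suc (2 * (2 ^ length ms - 1)) = 2 ^ length (m # ms) - 1" unfolding x2 using x1 by arith
    then show ?thesis by (metis power_Suc)
  qed
  finally show ?case unfolding f'_def by simp
qed



definition sgnv :: "(nat \<Rightarrow> real) \<Rightarrow> bool" where "sgnv \<sigma> \<longleftrightarrow> (\<forall>n. \<sigma> n = 1 \<or> \<sigma> n = -1)"

definition nzs :: "(real \<Rightarrow> real) \<Rightarrow> bool" where
  "nzs F \<longleftrightarrow> continuous_on {0<..<15} F \<and> (\<forall>a b. 0 \<le> a \<longrightarrow> a < b \<longrightarrow> b \<le> 15 \<longrightarrow> (\<exists>\<beta>\<in>{a<..<b}. F \<beta> \<noteq> 0))"

definition good :: "((nat \<Rightarrow> real) \<Rightarrow> real \<Rightarrow> real) \<Rightarrow> bool" where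
  "good f \<longleftrightarrow> (\<forall>\<sigma>. sgnv \<sigma> \<longrightarrow> nzs (\<lambda>\<beta>. f (\<lambda>n. \<sigma> n * rr n \<beta>) \<beta>))"

lemma nzs_mult:
  assumes F: "nzs F" and G: "nzs G" shows "nzs (\<lambda>\<beta>. F \<beta> * G \<beta>)"
  unfolding nzs_def
proof (intro conjI allI impI)
  show "continuous_on {0<..<15} (\<lambda>\<beta>. F \<beta> * G \<beta>)"
    using F G unfolding nzs_def by (intro continuous_intros) auto
  fix a b :: real assume ab: "0 \<le> a" "a < b" "b \<le> 15"
  obtain \<beta>0 where b0: "\<beta>0 \<in> {a<..<b}" "F \<beta>0 \<noteq> 0" using F ab unfolding nzs_def by blast
  have "isCont F \<beta>0"
    using F b0 ab unfolding nzs_def by (subst (asm) continuous_on_eq_continuous_at) auto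
  then obtain d where d: "d > 0" "\<forall>y. dist \<beta>0 y < d \<longrightarrow> F y \<noteq> 0"
    using continuous_at_avoid[where f=F and x=\<beta>0 and a=0] b0 by blast
  define a' where "a' = max a (\<beta>0 - d)"
  define b' where "b' = min b (\<beta>0 + d)"
  have "0 \<le> a'" "a' < b'" "b' \<le> 15" using ab b0 d unfolding a'_def b'_def by auto
  then obtain \<beta> where b: "\<beta> \<in> {a'<..<b'}" "G \<beta> \<noteq> 0" using G unfolding nzs_def by blast
  have "dist \<beta>0 \<beta> < d" using b unfolding a'_def b'_def dist_real_def by auto
  then have "F \<beta> \<noteq> 0" using d by blast
  moreover have "\<beta> \<in> {a<..<b}" using b unfolding a'_def b'_def by auto
  ultimately show "\<exists>\<beta>\<in>{a<..<b}. F \<beta> * G \<beta> \<noteq> 0" using b by auto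
qed

lemma good_step: "good f \<Longrightarrow> good (\<lambda>\<rho> \<beta>. f \<rho> \<beta> * f (\<rho>(m := - \<rho> m)) \<beta>)"
  unfolding good_def
proof (intro allI impI)
  fix \<sigma> assume g: "\<forall>\<sigma>. sgnv \<sigma> \<longrightarrow> nzs (\<lambda>\<beta>. f (\<lambda>n. \<sigma> n * rr n \<beta>) \<beta>)" and s: "sgnv \<sigma>"
  define \<sigma>' where "\<sigma>' = \<sigma>(m := - \<sigma> m)"
  have s': "sgnv \<sigma>'" using s unfolding sgnv_def \<sigma>'_def by auto
  have eq: "(\<lambda>n. \<sigma> n * rr n \<beta>)(m := - (\<sigma> m * rr m \<beta>)) = (\<lambda>n. \<sigma>' n * rr n \<beta>)" for \<beta>
    unfolding \<sigma>'_def by auto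
  have "nzs (\<lambda>\<beta>. f (\<lambda>n. \<sigma> n * rr n \<beta>) \<beta> * f (\<lambda>n. \<sigma>' n * rr n \<beta>) \<beta>)"
    using g s s' by (intro nzs_mult) auto
  then show "nzs (\<lambda>\<beta>. f (\<lambda>n. \<sigma> n * rr n \<beta>) \<beta> * f ((\<lambda>n. \<sigma> n * rr n \<beta>)(m := - (\<sigma> m * rr m \<beta>))) \<beta>)"
    unfolding eq .
qed

lemma elim_good: "good f \<Longrightarrow> good (elim ms f)"
  by (induction ms arbitrary: f) (auto intro: good_step)

lemma Phi_lin:
  assumes "finite S" "\<forall>n\<in>S. c n \<in> \<int>"
  shows "Phi S (\<lambda>\<rho> \<beta>. \<Sum>n\<in>S. c n * \<rho> n) 1"
proof -
  have "S' \<subseteq> S \<Longrightarrow> Phi S (\<lambda>\<rho> \<beta>. \<Sum>n\<in>S'. c n * \<rho> n) 1" for S'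
  proof (induction S' rule: infinite_finite_induct)
    case (infinite A) then show ?case using assms(1) finite_subset by blast
  next
    case empty then show ?case using Phi_zero by simp
  next
    case (insert x F)
    have x: "x \<in> S" "c x \<in> \<int>" using insert assms by auto
    have "Phi S (\<lambda>\<rho> \<beta>. c x * \<rho> x) 1"
      using Phi_const[OF x(2)] Phi.var[OF x(1)] by (intro Phi.mul[of S _ 0 _ 1]) auto
    then have "Phi S (\<lambda>\<rho> \<beta>. c x * \<rho> x + (\<Sum>n\<in>F. c n * \<rho> n)) 1"
      using insert by (intro Phi.add) auto
    then show ?case using insert by simp
  qed
  then show ?thesis by simp
qed

lemma good_lin:
  assumes fin: "finite S" and S0: "0 \<notin> S" and c: "\<forall>n\<in>S. c n \<in> \<int> \<and> c n \<noteq> 0" and ne: "S \<noteq> {}"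
  shows "good (\<lambda>\<rho> \<beta>. \<Sum>n\<in>S. c n * \<rho> n)"
  unfolding good_def nzs_def
proof (intro allI impI conjI)
  fix \<sigma> assume s: "sgnv \<sigma>"
  show "continuous_on {0<..<15} (\<lambda>\<beta>. \<Sum>n\<in>S. c n * (\<sigma> n * rr n \<beta>))"
    by (intro continuous_intros)
  fix a b :: real assume ab: "0 \<le> a" "a < b" "b \<le> 15"
  show "\<exists>\<beta>\<in>{a<..<b}. (\<Sum>n\<in>S. c n * (\<sigma> n * rr n \<beta>)) \<noteq> 0"
  proof (rule ccontr)
    assume "\<not> ?thesis"
    then have z: "\<forall>\<beta>\<in>{a<..<b}. (\<Sum>n\<in>S. (c n * \<sigma> n) * rr n \<beta>) = 0" by (simp add: mult.assoc)
    have ints: "\<forall>n\<in>S. c n * \<sigma> n \<in> \<int>" using c s unfolding sgnv_def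
      by (metis Ints_minus mult.right_neutral mult_minus_right)
    have "\<forall>n\<in>S. c n * \<sigma> n = 0" by (rule lin_indep[OF fin S0 ints ab z])
    moreover obtain n where "n \<in> S" using ne by blast
    moreover have "\<sigma> n \<noteq> 0" using s unfolding sgnv_def by (metis zero_neq_neg_one zero_neq_one)
    ultimately show False using c by auto
  qed
qed



lemma root_bound:
  fixes q :: "complex poly"
  shows "q \<noteq> 0 \<Longrightarrow> 0 \<le> \<eta> \<Longrightarrow> (\<forall>z. poly q z = 0 \<longrightarrow> \<eta> \<le> cmod (x - z)) \<Longrightarrow>
    cmod (lead_coeff q) * \<eta> ^ degree q \<le> cmod (poly q x)"
proof (induction "degree q" arbitrary: q)
  case 0
  have "[:coeff q 0:] = q" using degree_0_id 0 by metis
  then have "poly q x = coeff q 0" by (metis poly_const_conv)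
  then show ?case using 0 by simp
next
  case (Suc d)
  have "\<exists>z. poly q z = 0"
  proof (rule fundamental_theorem_of_algebra_alt)
    show "\<nexists>a l. a \<noteq> 0 \<and> l = 0 \<and> q = pCons a l" using Suc(2) by auto
  qed
  then obtain z where z: "poly q z = 0" by blast
  then obtain q1 where q1: "q = [:- z, 1:] * q1" using poly_eq_0_iff_dvd by (metis dvdE)
  have q10: "q1 \<noteq> 0" using q1 Suc(3) by auto
  have nz: "[:- z, 1:] \<noteq> (0::complex poly)" by simp
  have dq: "degree q = Suc (degree q1)"
  proof -
    have "degree q = degree [:- z, 1:] + degree q1" unfolding q1 by (rule degree_mult_eq[OF nz q10])
    then show ?thesis by simp
  qed
  have lq: "lead_coeff q = lead_coeff q1"
  proof -
    have "lead_coeff q = lead_coeff [:- z, 1:] * lead_coeff q1" unfolding q1 by (rule lead_coeff_mult)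
    then show ?thesis by simp
  qed
  have roots: "\<forall>w. poly q1 w = 0 \<longrightarrow> \<eta> \<le> cmod (x - w)"
    using Suc(5) q1 by auto
  have IH: "cmod (lead_coeff q1) * \<eta> ^ degree q1 \<le> cmod (poly q1 x)"
    using Suc(1)[of q1] dq Suc(2) q10 Suc(4) roots by auto
  have ez: "\<eta> \<le> cmod (x - z)" using Suc(5) z by auto
  have "cmod (lead_coeff q) * \<eta> ^ degree q = \<eta> * (cmod (lead_coeff q1) * \<eta> ^ degree q1)"
    using lq dq by simp
  also have "\<dots> \<le> cmod (x - z) * cmod (poly q1 x)"
    using IH ez Suc(4) by (intro mult_mono) auto
  also have "\<dots> = cmod (poly q x)"
  proof -
    have "poly q x = (x - z) * poly q1 x" unfolding q1 by (simp add: algebra_simps)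
    then show ?thesis by (simp add: norm_mult)
  qed
  finally show ?case .
qed

lemma poly_of_real_map: "poly (map_poly of_real p) (complex_of_real x) = complex_of_real (poly p x)"
  by (induction p) (auto simp: map_poly_pCons)

lemma sublevel:
  assumes ip: "intpoly p" and p0: "p \<noteq> 0" and dD: "degree p \<le> D" and D1: "1 \<le> D" and d0: "\<delta> > 0"
    and I: "\<beta>1 \<le> \<beta>2" "\<beta>2 - \<beta>1 \<le> 15"
    and A: "A \<subseteq> {x\<in>{\<beta>1..\<beta>2}. \<bar>poly p x\<bar> < \<delta>}"
  shows "emeasure lborel A \<le> ennreal ((2 * real D + 15) * root D \<delta>)"
proof -
  have rD: "0 \<le> root D \<delta>" using d0 by (simp add: real_root_ge_zero)
  have lead1: "1 \<le> \<bar>lead_coeff p\<bar>" using ip p0 unfolding intpoly_def by (intro Ints_nonzero_abs_ge1) auto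
  show ?thesis
  proof (cases "\<delta> \<ge> 1")
    case True
    have "emeasure lborel A \<le> emeasure lborel {\<beta>1..\<beta>2}" using A by (intro emeasure_mono) auto
    also have "\<dots> = ennreal (\<beta>2 - \<beta>1)" using I by simp
    also have "\<dots> \<le> ennreal ((2 * real D + 15) * root D \<delta>)"
    proof (rule ennreal_leI)
      have "1 \<le> root D \<delta>" using True D1 by (simp add: real_root_ge_1_iff)
      then have "15 \<le> 15 * root D \<delta>" by simp
      also have "\<dots> \<le> (2 * real D + 15) * root D \<delta>" using rD by (intro mult_right_mono) auto
      finally show "\<beta>2 - \<beta>1 \<le> (2 * real D + 15) * root D \<delta>" using I by linarith
    qed
    finally show ?thesis .
  next
    case False
    then have d1: "\<delta> < 1" by simp
    show ?thesis
    proof (cases "degree p = 0")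
      case True
      have "[:coeff p 0:] = p" using degree_0_id True by metis
      then have "poly p x = lead_coeff p" for x using True by (metis poly_const_conv)
      then have "A = {}" using A lead1 d1 by fastforce
      then show ?thesis by simp
    next
      case False
      define d where "d = degree p"
      have d1': "d \<ge> 1" using False unfolding d_def by simp
      define \<eta> where "\<eta> = root d \<delta>"
      have eta0: "0 \<le> \<eta>" unfolding \<eta>_def using d0 by (simp add: real_root_ge_zero)
      have etad: "\<eta> ^ d = \<delta>" unfolding \<eta>_def using d0 d1' by simp
      define q where "q = map_poly complex_of_real p"
      have q0: "q \<noteq> 0" using p0 unfolding q_def by (simp add: map_poly_eq_0_iff)
      have dq: "degree q = d" unfolding q_def d_def by (simp add: degree_map_poly)
      have lq: "lead_coeff q = complex_of_real (lead_coeff p)" unfolding q_def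
        by (simp add: degree_map_poly coeff_map_poly)
      define Z where "Z = {z. poly q z = 0}"
      have finZ: "finite Z" unfolding Z_def using q0 by (rule poly_roots_finite)
      have cardZ: "card Z \<le> d" unfolding Z_def using card_poly_roots_bound[OF q0] dq by simp
      have sub: "A \<subseteq> (\<Union>z\<in>Z. {Re z - \<eta> <..< Re z + \<eta>})"
      proof
        fix x assume xA: "x \<in> A"
        show "x \<in> (\<Union>z\<in>Z. {Re z - \<eta> <..< Re z + \<eta>})"
        proof (rule ccontr)
          assume "x \<notin> (\<Union>z\<in>Z. {Re z - \<eta> <..< Re z + \<eta>})"
          then have far: "\<forall>z. poly q z = 0 \<longrightarrow> \<eta> \<le> cmod (complex_of_real x - z)"
          proof (intro allI impI)
            fix z assume "x \<notin> (\<Union>z\<in>Z. {Re z - \<eta> <..< Re z + \<eta>})" "poly q z = 0"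
            then have "\<not> (Re z - \<eta> < x \<and> x < Re z + \<eta>)" unfolding Z_def by auto
            then have "\<eta> \<le> \<bar>x - Re z\<bar>" by arith
            also have "\<bar>x - Re z\<bar> = \<bar>Re (complex_of_real x - z)\<bar>" by simp
            also have "\<dots> \<le> cmod (complex_of_real x - z)" by (rule abs_Re_le_cmod)
            finally show "\<eta> \<le> cmod (complex_of_real x - z)" .
          qed
          have pq: "poly q (complex_of_real x) = complex_of_real (poly p x)"
            unfolding q_def by (rule poly_of_real_map)
          have "cmod (lead_coeff q) * \<eta> ^ degree q \<le> cmod (poly q (complex_of_real x))"
            by (rule root_bound[OF q0 eta0 far])
          then have "\<bar>lead_coeff p\<bar> * \<delta> \<le> \<bar>poly p x\<bar>"
            unfolding lq unfolding dq etad pq by simp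
          moreover have "\<delta> \<le> \<bar>lead_coeff p\<bar> * \<delta>" using lead1 d0 by simp
          moreover have "\<bar>poly p x\<bar> < \<delta>" using xA A by auto
          ultimately show False by linarith
        qed
      qed
      have "emeasure lborel A \<le> emeasure lborel (\<Union>z\<in>Z. {Re z - \<eta> <..< Re z + \<eta>})"
        using sub by (intro emeasure_mono) (auto intro!: borel_open open_UN)
      also have "\<dots> \<le> (\<Sum>z\<in>Z. emeasure lborel {Re z - \<eta> <..< Re z + \<eta>})"
        using finZ by (intro emeasure_subadditive_finite) auto
      also have "\<dots> = (\<Sum>z\<in>Z. ennreal (2 * \<eta>))"
        using eta0 by (intro sum.cong) (auto simp: emeasure_lborel_Ioo)
      also have "\<dots> = ennreal (real (card Z) * (2 * \<eta>))" using eta0 by (simp add: ennreal_mult ennreal_of_nat_eq_real_of_nat)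
      also have "\<dots> \<le> ennreal ((2 * real D + 15) * root D \<delta>)"
      proof (rule ennreal_leI)
        have "\<eta> \<le> root D \<delta>" unfolding \<eta>_def
          using d1' dD d0 d1 unfolding d_def by (intro real_root_increasing) auto
        have "real (card Z) * (2 * \<eta>) \<le> real D * (2 * \<eta>)"
          using cardZ dD eta0 unfolding d_def by (intro mult_right_mono) auto
        also have "\<dots> \<le> real D * (2 * root D \<delta>)" using \<open>\<eta> \<le> root D \<delta>\<close> by (intro mult_left_mono) auto
        also have "\<dots> \<le> (2 * real D + 15) * root D \<delta>" using rD by (simp add: algebra_simps)
        finally show "real (card Z) * (2 * \<eta>) \<le> (2 * real D + 15) * root D \<delta>" .
      qed
      finally show ?thesis .
    qed
  qed
qed



definition FL :: "int list \<Rightarrow> (nat \<Rightarrow> real) \<Rightarrow> real" where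
  "FL L \<rho> = sum_list (map (\<lambda>x. real_of_int (sgn x) * \<rho> (nat \<bar>x\<bar>)) L)"

definition cL :: "int list \<Rightarrow> nat \<Rightarrow> real" where
  "cL L n = FL L (\<lambda>k. if k = n then 1 else 0)"

lemma FL_Nil[simp]: "FL [] \<rho> = 0" unfolding FL_def by simp
lemma FL_Cons[simp]: "FL (x # L) \<rho> = real_of_int (sgn x) * \<rho> (nat \<bar>x\<bar>) + FL L \<rho>" unfolding FL_def by simp
lemma FL_append[simp]: "FL (L1 @ L2) \<rho> = FL L1 \<rho> + FL L2 \<rho>" unfolding FL_def by simp
lemma FL_replicate[simp]: "FL (replicate k x) \<rho> = real k * (real_of_int (sgn x) * \<rho> (nat \<bar>x\<bar>))"
  by (induction k) (auto simp: algebra_simps)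
lemma FL_concat: "FL (concat Ls) \<rho> = sum_list (map (\<lambda>L. FL L \<rho>) Ls)"
  by (induction Ls) auto

lemma FL_int: "(\<forall>n. \<rho> n \<in> \<int>) \<Longrightarrow> FL L \<rho> \<in> \<int>"
  by (induction L) auto

lemma cL_int: "cL L n \<in> \<int>" unfolding cL_def by (rule FL_int) auto

lemma FL_sum:
  assumes "set L \<subseteq> {- int N..int N}"
  shows "FL L \<rho> = (\<Sum>n\<in>{1..N}. cL L n * \<rho> n)"
  using assms
proof (induction L)
  case Nil then show ?case by (simp add: cL_def)
next
  case (Cons x L)
  have IH: "FL L \<rho> = (\<Sum>n\<in>{1..N}. cL L n * \<rho> n)" using Cons by auto
  have x: "\<bar>x\<bar> \<le> int N" using Cons.prems by auto
  have c: "cL (x # L) n = real_of_int (sgn x) * (if nat \<bar>x\<bar> = n then 1 else 0) + cL L n" for n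
    unfolding cL_def by simp
  have A: "(\<Sum>n\<in>{1..N}. cL (x # L) n * \<rho> n) =
        (\<Sum>n\<in>{1..N}. real_of_int (sgn x) * (if nat \<bar>x\<bar> = n then 1 else 0) * \<rho> n) + (\<Sum>n\<in>{1..N}. cL L n * \<rho> n)"
    unfolding c distrib_right sum.distrib by (rule refl)
  have B: "(\<Sum>n\<in>{1..N}. real_of_int (sgn x) * (if nat \<bar>x\<bar> = n then 1 else 0) * \<rho> n) =
     real_of_int (sgn x) * \<rho> (nat \<bar>x\<bar>)"
  proof (cases "x = 0")
    case True then show ?thesis by simp
  next
    case False
    then have xin: "nat \<bar>x\<bar> \<in> {1..N}" using x by auto
    have "(\<Sum>n\<in>{1..N}. real_of_int (sgn x) * (if nat \<bar>x\<bar> = n then 1 else 0) * \<rho> n) =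
          (\<Sum>n\<in>{1..N}. if n = nat \<bar>x\<bar> then real_of_int (sgn x) * \<rho> n else 0)"
      by (rule sum.cong) auto
    also have "\<dots> = real_of_int (sgn x) * \<rho> (nat \<bar>x\<bar>)" using xin by (simp add: sum.delta)
    finally show ?thesis .
  qed
  show ?case unfolding FL_Cons using A B IH by linarith
qed

lemma card_supp_le:
  "card {n\<in>{1..N}. cL L n \<noteq> 0} \<le> length L"
proof -
  have sub: "{n\<in>{1..N}. cL L n \<noteq> 0} \<subseteq> (\<lambda>x. nat \<bar>x\<bar>) ` set L"
  proof
    fix n assume n: "n \<in> {n\<in>{1..N}. cL L n \<noteq> 0}"
    show "n \<in> (\<lambda>x. nat \<bar>x\<bar>) ` set L"
    proof (rule ccontr)
      assume nn: "n \<notin> (\<lambda>x. nat \<bar>x\<bar>) ` set L"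
      have "\<forall>x\<in>set L. nat \<bar>x\<bar> \<noteq> n" using nn by auto
      then have "FL L (\<lambda>k. if k = n then 1 else 0) = 0" unfolding FL_def
        by (induction L) auto
      then show False using n unfolding cL_def by simp
    qed
  qed
  have "card {n\<in>{1..N}. cL L n \<noteq> 0} \<le> card ((\<lambda>x. nat \<bar>x\<bar>) ` set L)"
    by (rule card_mono[OF _ sub]) auto
  also have "\<dots> \<le> card (set L)" by (rule card_image_le) auto
  also have "\<dots> \<le> length L" by (rule card_length)
  finally show ?thesis .
qed



lemma rr_le:
  assumes "0 \<le> \<beta>" "\<beta> \<le> 15" shows "rr n \<beta> \<le> 5 * real n ^ 2"
proof -
  have "Ac n - Bc n * \<beta> \<le> (5 * real n ^ 2)^2"
  proof -
    consider "n = 0" | "n = 1" | "n \<ge> 2" by linarith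
    then show ?thesis
    proof cases
      case 3
      have "0 \<le> Bc n" using 3 unfolding Bc_def by simp
      then have "0 \<le> Bc n * \<beta>" using assms by simp
      moreover have "Ac n \<le> 2 * real n ^ 3" unfolding Ac_def by simp
      moreover have "2 * real n ^ 3 \<le> (5 * real n ^ 2)^2"
      proof -
        have "real n ^ 3 \<le> real n ^ 4" using 3 by (intro power_increasing) auto
        moreover have "(5 * real n ^ 2)^2 = 25 * real n ^ 4" by (simp add: power_mult_distrib flip: power_mult)
        moreover have "0 \<le> real n ^ 4" by simp
        ultimately show ?thesis by linarith
      qed
      ultimately show ?thesis by linarith
    qed (use assms in \<open>auto simp: Ac_def Bc_def\<close>)
  qed
  then have 1: "rr n \<beta> \<le> sqrt ((5 * real n ^ 2)^2)" unfolding rr_def by (rule real_sqrt_le_mono)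
  have 2: "sqrt ((5 * real n ^ 2)^2) = 5 * real n ^ 2" by (rule real_sqrt_unique) auto
  show ?thesis using 1 2 by linarith
qed

lemma FL_abs_bound:
  assumes "\<forall>n. \<bar>\<rho>' n\<bar> = \<bar>\<rho> n\<bar>" "\<forall>n. n \<le> N \<longrightarrow> \<bar>\<rho> n\<bar> \<le> R" "set L \<subseteq> {- int N..int N}"
  shows "\<bar>FL L \<rho>'\<bar> \<le> real (length L) * R"
  using assms(3)
proof (induction L)
  case Nil then show ?case by simp
next
  case (Cons x L)
  have s1: "\<bar>real_of_int (sgn x)\<bar> \<le> 1" by (cases "x > 0"; cases "x = 0") auto
  have "\<bar>real_of_int (sgn x) * \<rho>' (nat \<bar>x\<bar>)\<bar> \<le> \<bar>\<rho>' (nat \<bar>x\<bar>)\<bar>"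
    using s1 by (simp add: abs_mult mult_left_le_one_le)
  also have "\<dots> \<le> R" using assms(1,2) Cons.prems by auto
  finally have 1: "\<bar>real_of_int (sgn x) * \<rho>' (nat \<bar>x\<bar>)\<bar> \<le> R" .
  have 2: "\<bar>FL L \<rho>'\<bar> \<le> real (length L) * R" using Cons by auto
  have 3: "\<bar>FL (x # L) \<rho>'\<bar> \<le> \<bar>real_of_int (sgn x) * \<rho>' (nat \<bar>x\<bar>)\<bar> + \<bar>FL L \<rho>'\<bar>"
    unfolding FL_Cons by (rule abs_triangle_ineq)
  have 4: "real (length (x # L)) * R = R + real (length L) * R" by (simp add: algebra_simps)
  show ?case using 1 2 3 4 by linarith
qed

lemma valid_rr: "0 \<le> \<beta> \<Longrightarrow> \<beta> \<le> 15 \<Longrightarrow> valid (\<lambda>n. rr n \<beta>) \<beta>"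
  unfolding valid_def using rr_sq by (simp add: poly_Rp)

lemma list_bound:
  assumes L: "set L \<subseteq> {- int N..int N}" "length L \<le> M" "\<exists>n\<in>{1..N}. cL L n \<noteq> 0"
    and I: "0 < \<beta>1" "\<beta>1 \<le> \<beta>2" "\<beta>2 < 15" and e: "0 < \<epsilon>"
    and K: "K = 5 * real M * real N ^ 2 + 1"
  shows "emeasure lborel {\<beta>\<in>{\<beta>1..\<beta>2}. \<bar>FL L (\<lambda>n. rr n \<beta>)\<bar> < \<epsilon>}
           \<le> ennreal ((2 * real (2^M) + 15) * root (2^M) (\<epsilon> * K ^ (2^M)))"
proof -
  define S where "S = {n\<in>{1..N}. cL L n \<noteq> 0}"
  have finS: "finite S" unfolding S_def by simp
  have S0: "0 \<notin> S" unfolding S_def by simp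
  have Sne: "S \<noteq> {}" using L(3) unfolding S_def by auto
  have cardS: "card S \<le> M" using card_supp_le[of N L] L(2) unfolding S_def by simp
  define f where "f = (\<lambda>(\<rho>::nat\<Rightarrow>real) (\<beta>::real). \<Sum>n\<in>S. cL L n * \<rho> n)"
  have FLf: "FL L \<rho> = f \<rho> \<beta>" for \<rho> \<beta>
  proof -
    have "FL L \<rho> = (\<Sum>n\<in>{1..N}. cL L n * \<rho> n)" by (rule FL_sum[OF L(1)])
    also have "\<dots> = (\<Sum>n\<in>{1..N}. if cL L n \<noteq> 0 then cL L n * \<rho> n else 0)" by (rule sum.cong) auto
    also have "\<dots> = f \<rho> \<beta>" unfolding f_def S_def by (rule sum.inter_filter[symmetric]) simp
    finally show ?thesis .
  qed
  define ms where "ms = sorted_list_of_set S"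
  have ms: "distinct ms" "set ms = S" "length ms = card S" unfolding ms_def using finS by auto
  have Phif: "Phi (set ms) f 1" unfolding ms(2) f_def by (rule Phi_lin[OF finS]) (auto intro: cL_int)
  obtain p where p: "intpoly p" "2 * degree p \<le> 2 ^ length ms * 1"
      "\<forall>\<rho> \<beta>. valid \<rho> \<beta> \<longrightarrow> elim ms f \<rho> \<beta> = poly p \<beta>"
    using elim_poly[OF ms(1) Phif] by blast
  have goodf: "good f" unfolding f_def by (rule good_lin[OF finS S0 _ Sne]) (auto simp: S_def intro: cL_int)
  have "good (elim ms f)" by (rule elim_good[OF goodf])
  then have "nzs (\<lambda>\<beta>. elim ms f (\<lambda>n. 1 * rr n \<beta>) \<beta>)" unfolding good_def sgnv_def by auto
  then have "\<forall>a b. 0 \<le> a \<longrightarrow> a < b \<longrightarrow> b \<le> 15 \<longrightarrow> (\<exists>\<beta>\<in>{a<..<b}. elim ms f (\<lambda>n. 1 * rr n \<beta>) \<beta> \<noteq> 0)"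
    unfolding nzs_def by blast
  then have "\<exists>\<beta>\<in>{0<..<15::real}. elim ms f (\<lambda>n. 1 * rr n \<beta>) \<beta> \<noteq> 0"
    by (erule_tac x=0 in allE, erule_tac x=15 in allE) simp
  then obtain \<beta>' where b': "\<beta>' \<in> {0<..<15}" "elim ms f (\<lambda>n. 1 * rr n \<beta>') \<beta>' \<noteq> 0" by blast
  have "poly p \<beta>' \<noteq> 0" using p(3) valid_rr[of \<beta>'] b' by auto
  then have p0: "p \<noteq> 0" by auto
  define E where "E = (2::nat) ^ M"
  have E1: "1 \<le> E" unfolding E_def by simp
  have degp: "degree p \<le> E"
  proof -
    have "(2::nat) ^ length ms \<le> 2 ^ M" using cardS ms(3) by (intro power_increasing) auto
    then show ?thesis using p(2) unfolding E_def by linarith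
  qed
  have K1: "1 \<le> K" unfolding K by simp
  have sub: "{\<beta>\<in>{\<beta>1..\<beta>2}. \<bar>FL L (\<lambda>n. rr n \<beta>)\<bar> < \<epsilon>} \<subseteq> {x\<in>{\<beta>1..\<beta>2}. \<bar>poly p x\<bar> < \<epsilon> * K ^ E}"
  proof
    fix \<beta> assume b: "\<beta> \<in> {\<beta>\<in>{\<beta>1..\<beta>2}. \<bar>FL L (\<lambda>n. rr n \<beta>)\<bar> < \<epsilon>}"
    have b0: "0 \<le> \<beta>" "\<beta> \<le> 15" using b I by auto
    have pe: "poly p \<beta> = elim ms f (\<lambda>n. rr n \<beta>) \<beta>" using p(3) valid_rr[OF b0] by auto
    have bnd: "\<forall>\<rho>'. (\<forall>n. \<bar>\<rho>' n\<bar> = \<bar>rr n \<beta>\<bar>) \<longrightarrow> \<bar>f \<rho>' \<beta>\<bar> \<le> K"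
    proof (intro allI impI)
      fix \<rho>' assume a: "\<forall>n. \<bar>\<rho>' n\<bar> = \<bar>rr n \<beta>\<bar>"
      have R: "\<forall>n. n \<le> N \<longrightarrow> \<bar>rr n \<beta>\<bar> \<le> 5 * real N ^ 2"
      proof (intro allI impI)
        fix n assume "n \<le> N"
        have "\<bar>rr n \<beta>\<bar> = rr n \<beta>" unfolding rr_def using R_nonneg[OF b0] by simp
        also have "\<dots> \<le> 5 * real n ^ 2" by (rule rr_le[OF b0])
        also have "\<dots> \<le> 5 * real N ^ 2" using \<open>n \<le> N\<close> by (simp add: power_mono)
        finally show "\<bar>rr n \<beta>\<bar> \<le> 5 * real N ^ 2" .
      qed
      have "\<bar>FL L \<rho>'\<bar> \<le> real (length L) * (5 * real N ^ 2)" by (rule FL_abs_bound[OF a R L(1)])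
      also have "\<dots> \<le> real M * (5 * real N ^ 2)" using L(2) by (intro mult_right_mono) auto
      also have "\<dots> \<le> K" unfolding K by simp
      finally show "\<bar>f \<rho>' \<beta>\<bar> \<le> K" using FLf by simp
    qed
    have "\<bar>elim ms f (\<lambda>n. rr n \<beta>) \<beta>\<bar> \<le> \<bar>f (\<lambda>n. rr n \<beta>) \<beta>\<bar> * K ^ (2 ^ length ms - 1)"
      using elim_bound[of K "\<lambda>n. rr n \<beta>" f \<beta> ms] K1 bnd by auto
    also have "\<dots> < \<epsilon> * K ^ (2 ^ length ms - 1)"
      using b FLf K1 by (intro mult_strict_right_mono) auto
    also have "\<dots> \<le> \<epsilon> * K ^ E"
    proof -
      have "(2::nat) ^ length ms \<le> 2 ^ M" using cardS ms(3) by (intro power_increasing) auto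
      then have "(2::nat) ^ length ms - 1 \<le> E" unfolding E_def by linarith
      then show ?thesis using K1 e by (intro mult_left_mono power_increasing) auto
    qed
    finally show "\<beta> \<in> {x\<in>{\<beta>1..\<beta>2}. \<bar>poly p x\<bar> < \<epsilon> * K ^ E}" using b pe by auto
  qed
  have "emeasure lborel {\<beta>\<in>{\<beta>1..\<beta>2}. \<bar>FL L (\<lambda>n. rr n \<beta>)\<bar> < \<epsilon>} \<le> ennreal ((2 * real E + 15) * root E (\<epsilon> * K ^ E))"
    by (rule sublevel[OF p(1) p0 degp E1 _ I(2) _ sub]) (use e K1 I in auto)
  then show ?thesis unfolding E_def by simp
qed



lemma omega_rr: "omega \<beta> \<gamma> j = sqrt \<gamma> / 2 * rr (nat \<bar>j\<bar>) \<beta>"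
proof -
  have n: "real (nat \<bar>j\<bar>) = real_of_int \<bar>j\<bar>" by simp
  have "omega \<beta> \<gamma> j = sqrt (\<gamma> * \<bar>real_of_int j\<bar> / 2 * (\<bar>real_of_int j\<bar>^2 - \<beta> / 2 * \<bar>real_of_int j\<bar> + \<beta> - 1))"
    unfolding omega_def by (simp only: real_sqrt_mult)
  also have "\<gamma> * \<bar>real_of_int j\<bar> / 2 * (\<bar>real_of_int j\<bar>^2 - \<beta> / 2 * \<bar>real_of_int j\<bar> + \<beta> - 1)
      = (\<gamma> / 4) * (Ac (nat \<bar>j\<bar>) - Bc (nat \<bar>j\<bar>) * \<beta>)"
    unfolding Ac_def Bc_def n by (simp add: algebra_simps power2_eq_square power3_eq_cube)
  also have "sqrt (\<gamma> / 4 * (Ac (nat \<bar>j\<bar>) - Bc (nat \<bar>j\<bar>) * \<beta>)) = sqrt (\<gamma> / 4) * rr (nat \<bar>j\<bar>) \<beta>"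
    unfolding rr_def by (rule real_sqrt_mult)
  also have "sqrt (\<gamma> / 4) = sqrt \<gamma> / 2" by (simp add: real_sqrt_divide)
  finally show ?thesis .
qed

definition la :: "(int \<Rightarrow> nat) \<Rightarrow> int \<Rightarrow> int list" where
  "la a s = concat (map (\<lambda>j. replicate (a j) (s * \<bar>j\<bar>)) (sorted_list_of_set (supp_mi a)))"

lemma la_length: "multi_index a \<Longrightarrow> length (la a s) = mi_len a"
  unfolding la_def mi_len_def multi_index_def supp_mi_def
  by (simp add: length_concat comp_def sum_list_distinct_conv_sum_set)

lemma la_FL:
  assumes "multi_index a" "s = 1 \<or> s = -1"
  shows "FL (la a s) \<rho> = real_of_int s * (\<Sum>j\<in>supp_mi a. real (a j) * \<rho> (nat \<bar>j\<bar>))"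
proof -
  have fin: "finite (supp_mi a)" and z: "0 \<notin> supp_mi a" using assms(1) unfolding multi_index_def supp_mi_def by auto
  have "FL (la a s) \<rho> = (\<Sum>j\<in>supp_mi a. FL (replicate (a j) (s * \<bar>j\<bar>)) \<rho>)"
    unfolding la_def FL_concat using fin by (simp add: comp_def sum_list_distinct_conv_sum_set)
  also have "\<dots> = (\<Sum>j\<in>supp_mi a. real_of_int s * (real (a j) * \<rho> (nat \<bar>j\<bar>)))"
  proof (rule sum.cong)
    fix j assume j: "j \<in> supp_mi a"
    then have "j \<noteq> 0" using z by auto
    then have "sgn (s * \<bar>j\<bar>) = s" "nat \<bar>s * \<bar>j\<bar>\<bar> = nat \<bar>j\<bar>" using assms(2) by (auto simp: sgn_mult abs_mult)
    then show "FL (replicate (a j) (s * \<bar>j\<bar>)) \<rho> = real_of_int s * (real (a j) * \<rho> (nat \<bar>j\<bar>))"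
      by simp
  qed simp
  finally show ?thesis by (simp add: sum_distrib_left)
qed

lemma la_set: "multi_index a \<Longrightarrow> (\<forall>j\<in>supp_mi a. \<bar>j\<bar> \<le> int N) \<Longrightarrow> s = 1 \<or> s = -1 \<Longrightarrow>
  set (la a s) \<subseteq> {- int N..int N}"
  unfolding la_def multi_index_def supp_mi_def by (auto simp: abs_mult)

lemma sum_pm:
  fixes g :: "int \<Rightarrow> real"
  assumes fin: "finite U" and g: "\<forall>j. j \<notin> U \<longrightarrow> g j = 0" and n: "1 \<le> n"
  shows "(\<Sum>j\<in>U. (if nat \<bar>j\<bar> = n then 1 else 0) * g j) = g (int n) + g (- int n)"
proof -
  have iff: "nat \<bar>j\<bar> = n \<longleftrightarrow> j = int n \<or> j = - int n" for j using n by auto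
  have "(\<Sum>j\<in>U. (if nat \<bar>j\<bar> = n then 1 else 0) * g j) = (\<Sum>j\<in>U \<union> {int n, - int n}. (if nat \<bar>j\<bar> = n then 1 else 0) * g j)"
    by (rule sum.mono_neutral_left) (use fin g in auto)
  also have "\<dots> = (\<Sum>j\<in>U \<union> {int n, - int n}. if j \<in> {int n, - int n} then g j else 0)"
    by (rule sum.cong) (auto simp: iff)
  also have "\<dots> = (\<Sum>j\<in>{int n, - int n}. g j)"
    by (subst sum.inter_filter[symmetric]) (use fin in auto, rule sum.cong, auto)
  also have "\<dots> = g (int n) + g (- int n)" using n by simp
  finally show ?thesis .
qed

lemma mk_list:
  assumes ma: "multi_index a" and ma': "multi_index a'" and len: "mi_len (\<lambda>j. a j + a' j) \<le> M"
    and nsap: "\<not> super_action_preserving a a'"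
  shows "\<exists>L N. 1 \<le> N \<and> set L \<subseteq> {- int N..int N} \<and> length L = M \<and> (\<exists>n\<in>{1..N}. cL L n \<noteq> 0) \<and>
     Max ((\<lambda>j. real_of_int \<bar>j\<bar>) ` (supp_mi a \<union> supp_mi a')) = real N \<and>
     (\<forall>\<rho>. FL L \<rho> = (\<Sum>j\<in>supp_mi a \<union> supp_mi a'. \<rho> (nat \<bar>j\<bar>) * (real (a j) - real (a' j))))"
proof -
  define U where "U = supp_mi a \<union> supp_mi a'"
  have finU: "finite U" using ma ma' unfolding U_def multi_index_def supp_mi_def by auto
  have U0: "0 \<notin> U" using ma ma' unfolding U_def multi_index_def supp_mi_def by auto
  have outU: "j \<notin> U \<Longrightarrow> a j = 0 \<and> a' j = 0" for j unfolding U_def supp_mi_def by auto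
  obtain n0 where n0: "n0 \<ge> 1" "a (int n0) + a (- int n0) \<noteq> a' (int n0) + a' (- int n0)"
    using nsap unfolding super_action_preserving_def by auto
  have Une: "U \<noteq> {}" using n0(2) outU by (metis add.right_neutral empty_iff)
  define X where "X = Max ((\<lambda>j. real_of_int \<bar>j\<bar>) ` U)"
  have "X \<in> (\<lambda>j. real_of_int \<bar>j\<bar>) ` U" unfolding X_def using finU Une by (intro Max_in) auto
  then obtain j0 where j0: "j0 \<in> U" "X = real_of_int \<bar>j0\<bar>" by auto
  define N where "N = nat \<bar>j0\<bar>"
  have XN: "X = real N" unfolding N_def j0(2) by simp
  have N1: "1 \<le> N" using j0(1) U0 unfolding N_def by (cases "j0 = 0") auto
  have jN: "\<forall>j\<in>U. \<bar>j\<bar> \<le> int N"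
  proof
    fix j assume "j \<in> U"
    then have "real_of_int \<bar>j\<bar> \<le> X" unfolding X_def using finU by (intro Max_ge) auto
    then show "\<bar>j\<bar> \<le> int N" unfolding XN by simp
  qed
  have lensum: "mi_len (\<lambda>j. a j + a' j) = mi_len a + mi_len a'"
  proof -
    have s: "supp_mi (\<lambda>j. a j + a' j) = U" unfolding U_def supp_mi_def by auto
    have "mi_len (\<lambda>j. a j + a' j) = (\<Sum>j\<in>U. a j) + (\<Sum>j\<in>U. a' j)"
      unfolding mi_len_def s by (simp add: sum.distrib)
    also have "(\<Sum>j\<in>U. a j) = mi_len a" unfolding mi_len_def
      by (rule sum.mono_neutral_right) (use finU in \<open>auto simp: U_def supp_mi_def\<close>)
    also have "(\<Sum>j\<in>U. a' j) = mi_len a'" unfolding mi_len_def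
      by (rule sum.mono_neutral_right) (use finU in \<open>auto simp: U_def supp_mi_def\<close>)
    finally show ?thesis .
  qed
  define L where "L = la a 1 @ la a' (-1) @ replicate (M - (mi_len a + mi_len a')) 0"
  have lenL: "length L = M" unfolding L_def using la_length[OF ma] la_length[OF ma'] len lensum by simp
  have setL: "set L \<subseteq> {- int N..int N}"
  proof -
    have "set (la a 1) \<subseteq> {- int N..int N}" using la_set[OF ma, of N 1] jN unfolding U_def by auto
    moreover have "set (la a' (-1)) \<subseteq> {- int N..int N}" using la_set[OF ma', of N "-1"] jN unfolding U_def by auto
    ultimately show ?thesis unfolding L_def by auto
  qed
  have FLL: "FL L \<rho> = (\<Sum>j\<in>U. \<rho> (nat \<bar>j\<bar>) * (real (a j) - real (a' j)))" for \<rho>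
  proof -
    have "FL L \<rho> = (\<Sum>j\<in>supp_mi a. real (a j) * \<rho> (nat \<bar>j\<bar>)) - (\<Sum>j\<in>supp_mi a'. real (a' j) * \<rho> (nat \<bar>j\<bar>))"
      unfolding L_def using la_FL[OF ma, of 1 \<rho>] la_FL[OF ma', of "-1" \<rho>] by simp
    also have "(\<Sum>j\<in>supp_mi a. real (a j) * \<rho> (nat \<bar>j\<bar>)) = (\<Sum>j\<in>U. real (a j) * \<rho> (nat \<bar>j\<bar>))"
      by (rule sum.mono_neutral_left) (use finU in \<open>auto simp: U_def supp_mi_def\<close>)
    also have "(\<Sum>j\<in>supp_mi a'. real (a' j) * \<rho> (nat \<bar>j\<bar>)) = (\<Sum>j\<in>U. real (a' j) * \<rho> (nat \<bar>j\<bar>))"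
      by (rule sum.mono_neutral_left) (use finU in \<open>auto simp: U_def supp_mi_def\<close>)
    finally show ?thesis by (simp add: sum_subtractf[symmetric] algebra_simps)
  qed
  have cLn: "cL L n0 \<noteq> 0"
  proof -
    have "cL L n0 = (\<Sum>j\<in>U. (if nat \<bar>j\<bar> = n0 then 1 else 0) * (real (a j) - real (a' j)))"
      unfolding cL_def FLL by (rule sum.cong) auto
    also have "\<dots> = (real (a (int n0)) - real (a' (int n0))) + (real (a (- int n0)) - real (a' (- int n0)))"
      by (rule sum_pm[OF finU _ n0(1)]) (use outU in auto)
    finally have "cL L n0 = (real (a (int n0)) + real (a (- int n0))) - (real (a' (int n0)) + real (a' (- int n0)))"
      by simp
    moreover have "real (a (int n0)) + real (a (- int n0)) \<noteq> real (a' (int n0)) + real (a' (- int n0))"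
      using n0(2) by (metis of_nat_add of_nat_eq_iff)
    ultimately show ?thesis by simp
  qed
  have n0N: "n0 \<le> N"
  proof -
    have "a (int n0) \<noteq> 0 \<or> a (- int n0) \<noteq> 0 \<or> a' (int n0) \<noteq> 0 \<or> a' (- int n0) \<noteq> 0" using n0(2) by auto
    then have "int n0 \<in> U \<or> - int n0 \<in> U" unfolding U_def supp_mi_def by auto
    then show ?thesis using jN by auto
  qed
  show ?thesis
    by (rule exI[of _ L], rule exI[of _ N]) (use N1 setL lenL cLn n0 n0N XN FLL in \<open>auto simp: X_def U_def\<close>)
qed



lemma cont_FL: "continuous_on UNIV (\<lambda>\<beta>. FL L (\<lambda>n. rr n \<beta>))"
  by (induction L) (auto intro!: continuous_intros)

lemma bad_meas: "{\<beta>\<in>{\<beta>1..\<beta>2}. P \<and> \<bar>FL L (\<lambda>n. rr n \<beta>)\<bar> < e} \<in> sets lborel"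
proof (cases P)
  case True
  have "open {\<beta>. \<bar>FL L (\<lambda>n. rr n \<beta>)\<bar> < e}"
    by (rule open_Collect_less) (auto intro!: continuous_intros cont_FL)
  then have "{\<beta>. \<bar>FL L (\<lambda>n. rr n \<beta>)\<bar> < e} \<in> sets lborel" by simp
  moreover have "{\<beta>\<in>{\<beta>1..\<beta>2}. P \<and> \<bar>FL L (\<lambda>n. rr n \<beta>)\<bar> < e} = {\<beta>1..\<beta>2} \<inter> {\<beta>. \<bar>FL L (\<lambda>n. rr n \<beta>)\<bar> < e}"
    using True by auto
  ultimately show ?thesis by simp
qed simp

lemma per_L_bound:
  assumes I: "0 < \<beta>1" "\<beta>1 \<le> \<beta>2" "\<beta>2 < 15"
    and L: "set L \<subseteq> {- int (Suc N)..int (Suc N)}" "length L = M"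
    and E: "E = 2 ^ M" and T: "T = E * (M + 4)"
  shows "emeasure lborel {\<beta>\<in>{\<beta>1..\<beta>2}. (\<exists>n\<in>{1..Suc N}. cL L n \<noteq> 0) \<and>
            \<bar>FL L (\<lambda>n. rr n \<beta>)\<bar> < 1 / (real (Suc N) ^ T * real (Suc j) ^ E)}
         \<le> ennreal ((2 * real E + 15) * (5 * real M * real (Suc N) ^ 2 + 1) / (real (Suc N) ^ (M + 4) * real (Suc j)))"
proof (cases "\<exists>n\<in>{1..Suc N}. cL L n \<noteq> 0")
  case True
  define K where "K = 5 * real M * real (Suc N) ^ 2 + 1"
  define Q where "Q = real (Suc N) ^ (M + 4) * real (Suc j)"
  define \<epsilon> where "\<epsilon> = 1 / (real (Suc N) ^ T * real (Suc j) ^ E)"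
  have K0: "0 \<le> K" unfolding K_def by simp
  have Q0: "0 < Q" unfolding Q_def by simp
  have e0: "0 < \<epsilon>" unfolding \<epsilon>_def by simp
  have "emeasure lborel {\<beta>\<in>{\<beta>1..\<beta>2}. \<bar>FL L (\<lambda>n. rr n \<beta>)\<bar> < \<epsilon>}
           \<le> ennreal ((2 * real (2^M) + 15) * root (2^M) (\<epsilon> * K ^ (2^M)))"
    by (rule list_bound[OF L(1) _ True I e0 K_def]) (use L in simp)
  moreover have "root (2^M) (\<epsilon> * K ^ (2^M)) = K / Q"
  proof (rule real_root_pos_unique)
    show "0 < (2::nat) ^ M" by simp
    show "0 \<le> K / Q" using K0 Q0 by simp
    have "Q ^ E = real (Suc N) ^ T * real (Suc j) ^ E"
      unfolding Q_def T power_mult_distrib by (simp only: power_mult[symmetric] mult.commute)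
    then show "(K / Q) ^ 2 ^ M = \<epsilon> * K ^ 2 ^ M"
      unfolding \<epsilon>_def E[symmetric] by (simp add: power_divide)
  qed
  moreover have "{\<beta>\<in>{\<beta>1..\<beta>2}. (\<exists>n\<in>{1..Suc N}. cL L n \<noteq> 0) \<and> \<bar>FL L (\<lambda>n. rr n \<beta>)\<bar> < \<epsilon>}
      = {\<beta>\<in>{\<beta>1..\<beta>2}. \<bar>FL L (\<lambda>n. rr n \<beta>)\<bar> < \<epsilon>}" using True by auto
  ultimately show ?thesis unfolding \<epsilon>_def[symmetric] E[symmetric] K_def[symmetric] Q_def[symmetric]
    by (simp add: mult.assoc)
qed simp

lemma card_Lists: "card {L. set L \<subseteq> {- int (Suc N)..int (Suc N)} \<and> length L = M} = (2 * N + 3) ^ M"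
proof -
  have "card {- int (Suc N)..int (Suc N)} = 2 * N + 3" by (simp add: card_atLeastAtMost_int) 
  then show ?thesis by (simp add: card_lists_length_eq)
qed

lemma per_N_real:
  assumes M1: "1 \<le> M"
  shows "real ((2 * N + 3) ^ M) * ((2 * real E + 15) * (5 * real M * real (Suc N) ^ 2 + 1) / (real (Suc N) ^ (M + 4) * real (Suc j)))
     \<le> (3 ^ M * (2 * real E + 15) * (6 * real M)) / (real (Suc N) ^ 2 * real (Suc j))"
proof -
  define x where "x = real (Suc N)"
  have x1: "1 \<le> x" unfolding x_def by simp
  have A: "real ((2 * N + 3) ^ M) \<le> 3 ^ M * x ^ M"
  proof -
    have "real (2 * N + 3) \<le> 3 * x" unfolding x_def by simp
    then have "real (2 * N + 3) ^ M \<le> (3 * x) ^ M" by (intro power_mono) auto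
    then show ?thesis by (simp add: power_mult_distrib)
  qed
  have B: "5 * real M * x ^ 2 + 1 \<le> 6 * real M * x ^ 2"
  proof -
    have "1 \<le> real M * x ^ 2" using M1 x1 by (metis le_add_same_cancel1 mult_le_cancel_left1 mult_le_mono1 nat_less_le not_le of_nat_1 of_nat_le_iff one_le_power order_less_le_trans power_one zero_le_one linorder_not_less mult_numeral_1_right order_trans mult_left_mono zero_le_numeral)
    then show ?thesis by simp
  qed
  have P: "real ((2 * N + 3) ^ M) * ((2 * real E + 15) * (5 * real M * x ^ 2 + 1))
        \<le> (3 ^ M * x ^ M) * ((2 * real E + 15) * (6 * real M * x ^ 2))"
    using A B x1 by (intro mult_mono mult_left_mono) auto
  have xe: "x ^ (M + 4) = x ^ M * x ^ 2 * x ^ 2" by (simp add: power_add flip: power_mult)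
  have "real ((2 * N + 3) ^ M) * ((2 * real E + 15) * (5 * real M * x ^ 2 + 1) / (x ^ (M + 4) * real (Suc j)))
      = real ((2 * N + 3) ^ M) * ((2 * real E + 15) * (5 * real M * x ^ 2 + 1)) / (x ^ (M + 4) * real (Suc j))"
    by simp
  also have "\<dots> \<le> (3 ^ M * x ^ M) * ((2 * real E + 15) * (6 * real M * x ^ 2)) / (x ^ (M + 4) * real (Suc j))"
    using P x1 by (intro divide_right_mono) auto
  also have "\<dots> = (3 ^ M * (2 * real E + 15) * (6 * real M)) / (x ^ 2 * real (Suc j))"
  proof -
    have nz: "x ^ (M + 4) * real (Suc j) \<noteq> 0" "x ^ 2 * real (Suc j) \<noteq> 0" using x1 by auto
    show ?thesis unfolding frac_eq_eq[OF nz] unfolding xe by (simp add: algebra_simps)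
  qed
  finally show ?thesis unfolding x_def .
qed



theorem proposition2p6:
  fixes M :: nat and \<beta>1 \<beta>2 :: real
  assumes "M \<ge> 1" and "0 < \<beta>1" and "\<beta>1 < \<beta>2" and "\<beta>2 < 4 * (2 + sqrt 3)"
  shows "\<exists>\<tau>::real. \<tau> > 0 \<and> (\<exists>B. B \<subseteq> {\<beta>1..\<beta>2} \<and> B \<in> null_sets lebesgue \<and>
     (\<forall>\<beta>\<in>{\<beta>1..\<beta>2} - B. \<forall>\<gamma>::real. \<gamma> > 0 \<longrightarrow>
        (\<exists>\<nu>::real. \<nu> > 0 \<and>
          (\<forall>a a'. multi_index a \<longrightarrow> multi_index a' \<longrightarrow>
             mi_len (\<lambda>j. a j + a' j) \<le> M \<longrightarrow> \<not> super_action_preserving a a' \<longrightarrow>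
             \<bar>\<Sum>j\<in>supp_mi a \<union> supp_mi a'. omega \<beta> \<gamma> j * (real (a j) - real (a' j))\<bar>
               \<ge> \<nu> / (Max ((\<lambda>j. real_of_int \<bar>j\<bar>) ` (supp_mi a \<union> supp_mi a'))) powr \<tau>))))"
proof -
  have M1: "1 \<le> M" using assms(1) .
  have "sqrt 3 < sqrt ((7/4)^2)" by (intro real_sqrt_less_mono) (simp add: power2_eq_square)
  then have "sqrt 3 < 7/4" by simp
  then have I: "0 < \<beta>1" "\<beta>1 \<le> \<beta>2" "\<beta>2 < 15" using assms by auto
  define E where "E = (2::nat) ^ M"
  define T where "T = E * (M + 4)"
  have E1: "1 \<le> E" unfolding E_def by simp
  have T1: "1 \<le> T" unfolding T_def using E1 by simp
  define Lists where "Lists N = {L. set L \<subseteq> {- int N..int N} \<and> length L = M}" for N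
  define eps where "eps N k = 1 / (real (Suc N) ^ T * real (Suc k) ^ E)" for N k :: nat
  define bad where "bad k N L = {\<beta>\<in>{\<beta>1..\<beta>2}. (\<exists>n\<in>{1..Suc N}. cL L n \<noteq> 0) \<and> \<bar>FL L (\<lambda>n. rr n \<beta>)\<bar> < eps N k}"
    for k N L
  define U where "U k = (\<Union>N. \<Union>L\<in>Lists (Suc N). bad k N L)" for k
  define B where "B = {\<beta>1..\<beta>2} \<inter> (\<Inter>k. U k)"
  define C1 where "C1 = 3 ^ M * (2 * real E + 15) * (6 * real M)"
  define S2 where "S2 = (\<Sum>N. 1 / real (Suc N) ^ 2)"
  have C10: "0 \<le> C1" unfolding C1_def by simp
  have sum2: "summable (\<lambda>N. 1 / real (Suc N) ^ 2)"
  proof -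
    have "summable (\<lambda>n. inverse (real n ^ 2))" by (rule inverse_power_summable) simp
    then have "summable (\<lambda>n. inverse (real (Suc n) ^ 2))" by (subst summable_Suc_iff)
    then show ?thesis by (simp add: divide_inverse)
  qed
  have S20: "0 \<le> S2" unfolding S2_def using sum2 by (intro suminf_nonneg) auto
  have finL: "finite (Lists N)" for N unfolding Lists_def by (rule finite_lists_length_eq) simp
  have measbad: "bad k N L \<in> sets lborel" for k N L unfolding bad_def by (rule bad_meas)
  have measUN: "(\<Union>L\<in>Lists (Suc N). bad k N L) \<in> sets lborel" for k N
    using finL measbad by (intro sets.finite_UN) auto
  have measU: "U k \<in> sets lborel" for k unfolding U_def
    using measUN by (intro sets.countable_UN) auto
  have perN: "emeasure lborel (\<Union>L\<in>Lists (Suc N). bad k N L) \<le> ennreal (C1 * (1 / real (Suc N) ^ 2) / real (Suc k))"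
    for N k
  proof -
    define bL where "bL = (2 * real E + 15) * (5 * real M * real (Suc N) ^ 2 + 1) / (real (Suc N) ^ (M + 4) * real (Suc k))"
    have bL0: "0 \<le> bL" unfolding bL_def by simp
    have "emeasure lborel (\<Union>L\<in>Lists (Suc N). bad k N L) \<le> (\<Sum>L\<in>Lists (Suc N). emeasure lborel (bad k N L))"
      using finL measbad by (intro emeasure_subadditive_finite) auto
    also have "\<dots> \<le> (\<Sum>L\<in>Lists (Suc N). ennreal bL)"
    proof (rule sum_mono)
      fix L assume L: "L \<in> Lists (Suc N)"
      show "emeasure lborel (bad k N L) \<le> ennreal bL"
        unfolding bad_def eps_def bL_def
        by (rule per_L_bound[OF I _ _ E_def T_def]) (use L in \<open>auto simp: Lists_def\<close>)
    qed
    also have "\<dots> = ennreal (real (card (Lists (Suc N))) * bL)"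
      using bL0 by (simp add: ennreal_mult ennreal_of_nat_eq_real_of_nat)
    also have "\<dots> \<le> ennreal (C1 * (1 / real (Suc N) ^ 2) / real (Suc k))"
    proof (rule ennreal_leI)
      have "card (Lists (Suc N)) = (2 * N + 3) ^ M" unfolding Lists_def by (rule card_Lists)
      then show "real (card (Lists (Suc N))) * bL \<le> C1 * (1 / real (Suc N) ^ 2) / real (Suc k)"
        using per_N_real[OF M1, of N E k] unfolding bL_def C1_def by simp
    qed
    finally show ?thesis .
  qed
  have Ubound: "emeasure lborel (U k) \<le> ennreal (C1 * S2 / real (Suc k))" for k
  proof -
    have sm: "summable (\<lambda>N. C1 * (1 / real (Suc N) ^ 2) / real (Suc k))"
      using sum2 by (intro summable_divide summable_mult)
    have "emeasure lborel (U k) \<le> (\<Sum>N. emeasure lborel (\<Union>L\<in>Lists (Suc N). bad k N L))"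
      unfolding U_def using measUN by (intro emeasure_subadditive_countably) auto
    also have "\<dots> \<le> (\<Sum>N. ennreal (C1 * (1 / real (Suc N) ^ 2) / real (Suc k)))"
      by (intro suminf_le perN) auto
    also have "\<dots> = ennreal (\<Sum>N. C1 * (1 / real (Suc N) ^ 2) / real (Suc k))"
      by (rule suminf_ennreal2) (use sm C10 in auto)
    also have "(\<Sum>N. C1 * (1 / real (Suc N) ^ 2) / real (Suc k)) = C1 * S2 / real (Suc k)"
    proof -
      have s1: "summable (\<lambda>N. C1 * (1 / real (Suc N) ^ 2))" using sum2 by (rule summable_mult)
      have "(\<Sum>N. C1 * (1 / real (Suc N) ^ 2) / real (Suc k)) = (\<Sum>N. C1 * (1 / real (Suc N) ^ 2)) / real (Suc k)"
        by (rule suminf_divide[OF s1])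
      also have "(\<Sum>N. C1 * (1 / real (Suc N) ^ 2)) = C1 * S2" unfolding S2_def by (rule suminf_mult[OF sum2])
      finally show ?thesis .
    qed
    finally show ?thesis .
  qed
  have measB: "B \<in> sets lborel" unfolding B_def using measU
    by (intro sets.Int sets.countable_INT) auto
  have "emeasure lborel B \<le> 0"
  proof (rule ennreal_le_epsilon)
    fix e :: real assume e: "0 < e"
    obtain n :: nat where n: "C1 * S2 / e < real n" using reals_Archimedean2 by blast
    have "C1 * S2 / real (Suc n) \<le> e"
    proof -
      have "C1 * S2 < e * real n" using n e by (simp add: divide_less_eq mult.commute)
      also have "\<dots> \<le> e * real (Suc n)" using e by simp
      finally show ?thesis by (simp add: divide_le_eq mult.commute)
    qed
    have "emeasure lborel B \<le> emeasure lborel (U n)"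
      unfolding B_def using measU by (intro emeasure_mono) auto
    also have "\<dots> \<le> ennreal (C1 * S2 / real (Suc n))" by (rule Ubound)
    also have "\<dots> \<le> 0 + ennreal e" using \<open>C1 * S2 / real (Suc n) \<le> e\<close> by (simp add: ennreal_leI)
    finally show "emeasure lborel B \<le> 0 + ennreal e" .
  qed
  then have "B \<in> null_sets lborel" using measB by (intro null_setsI) auto
  then have nullB: "B \<in> null_sets lebesgue" by (rule null_sets_completionI)
  show ?thesis
  proof (rule exI[of _ "real T"], intro conjI)
    show "0 < real T" using T1 by simp
    show "\<exists>B. B \<subseteq> {\<beta>1..\<beta>2} \<and> B \<in> null_sets lebesgue \<and>
     (\<forall>\<beta>\<in>{\<beta>1..\<beta>2} - B. \<forall>\<gamma>::real. \<gamma> > 0 \<longrightarrow>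
        (\<exists>\<nu>::real. \<nu> > 0 \<and>
          (\<forall>a a'. multi_index a \<longrightarrow> multi_index a' \<longrightarrow>
             mi_len (\<lambda>j. a j + a' j) \<le> M \<longrightarrow> \<not> super_action_preserving a a' \<longrightarrow>
             \<bar>\<Sum>j\<in>supp_mi a \<union> supp_mi a'. omega \<beta> \<gamma> j * (real (a j) - real (a' j))\<bar>
               \<ge> \<nu> / (Max ((\<lambda>j. real_of_int \<bar>j\<bar>) ` (supp_mi a \<union> supp_mi a'))) powr real T)))"
  proof (rule exI[of _ B], intro conjI ballI allI impI)
    show "B \<subseteq> {\<beta>1..\<beta>2}" unfolding B_def by auto
    show "B \<in> null_sets lebesgue" by (rule nullB)
  next
    fix \<beta> \<gamma> :: real assume b: "\<beta> \<in> {\<beta>1..\<beta>2} - B" and g: "0 < \<gamma>"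
    then obtain k where k: "\<beta> \<notin> U k" unfolding B_def by auto
    define \<nu> where "\<nu> = sqrt \<gamma> / 2 / real (Suc k) ^ E"
    show "\<exists>\<nu>>0. \<forall>a a'. multi_index a \<longrightarrow> multi_index a' \<longrightarrow>
             mi_len (\<lambda>j. a j + a' j) \<le> M \<longrightarrow> \<not> super_action_preserving a a' \<longrightarrow>
             \<bar>\<Sum>j\<in>supp_mi a \<union> supp_mi a'. omega \<beta> \<gamma> j * (real (a j) - real (a' j))\<bar>
               \<ge> \<nu> / (Max ((\<lambda>j. real_of_int \<bar>j\<bar>) ` (supp_mi a \<union> supp_mi a'))) powr real T"
    proof (rule exI[of _ \<nu>], intro conjI allI impI)
      show "0 < \<nu>" unfolding \<nu>_def using g by simp
      fix a a' assume ma: "multi_index a" and ma': "multi_index a'"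
        and len: "mi_len (\<lambda>j. a j + a' j) \<le> M" and ns: "\<not> super_action_preserving a a'"
      obtain L N where LN: "1 \<le> N" "set L \<subseteq> {- int N..int N}" "length L = M" "\<exists>n\<in>{1..N}. cL L n \<noteq> 0"
        "Max ((\<lambda>j. real_of_int \<bar>j\<bar>) ` (supp_mi a \<union> supp_mi a')) = real N"
        "\<forall>\<rho>. FL L \<rho> = (\<Sum>j\<in>supp_mi a \<union> supp_mi a'. \<rho> (nat \<bar>j\<bar>) * (real (a j) - real (a' j)))"
        using mk_list[OF ma ma' len ns] by blast
      obtain N' where N': "N = Suc N'" using LN(1) by (cases N) auto
      have LL: "L \<in> Lists (Suc N')" unfolding Lists_def using LN N' by auto
      have "\<beta> \<notin> bad k N' L" using k LL unfolding U_def by auto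
      then have FLb: "eps N' k \<le> \<bar>FL L (\<lambda>n. rr n \<beta>)\<bar>" unfolding bad_def using b LN(4) N' by auto
      have sumeq: "(\<Sum>j\<in>supp_mi a \<union> supp_mi a'. omega \<beta> \<gamma> j * (real (a j) - real (a' j)))
          = sqrt \<gamma> / 2 * FL L (\<lambda>n. rr n \<beta>)"
        unfolding LN(6)[rule_format] omega_rr sum_distrib_left by (intro sum.cong refl) (simp add: field_simps)
      have pw: "real N powr real T = real N ^ T" using LN(1) by (simp add: powr_realpow)
      have "\<nu> / real N ^ T = sqrt \<gamma> / 2 * eps N' k" unfolding \<nu>_def eps_def N' by simp
      also have "\<dots> \<le> sqrt \<gamma> / 2 * \<bar>FL L (\<lambda>n. rr n \<beta>)\<bar>" using FLb g by (intro mult_left_mono) auto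
      also have "\<dots> = \<bar>sqrt \<gamma> / 2 * FL L (\<lambda>n. rr n \<beta>)\<bar>" using g by (simp add: abs_mult)
      finally show "\<nu> / (Max ((\<lambda>j. real_of_int \<bar>j\<bar>) ` (supp_mi a \<union> supp_mi a'))) powr real T
          \<le> \<bar>\<Sum>j\<in>supp_mi a \<union> supp_mi a'. omega \<beta> \<gamma> j * (real (a j) - real (a' j))\<bar>"
        unfolding LN(5) pw sumeq .
    qed
  qed
  qed
qed

end
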